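(* Let $0<\epsilon<1/2$, $C=1-h(\epsilon)$, $0<R<C$, $0<\rho<1$ and $\eta>0$ be fixed, and let $k=\lfloor Rn\rfloor$. Let $\mathcal{T}^{\eta}_{n\times k}=\{\mathbf{A}\in\mathcal{A}_{n\times k}: |W(\mathbf{A})/(nk)-\rho|<\eta\}$, where $W(\mathbf{A})$ is the number of ones of $\mathbf{A}$, equipped with the Bernoulli$(n,k,\rho)$ distribution conditioned on $\mathcal{T}^{\eta}_{n\times k}$. Then, over the BSC with cross-over probability $\epsilon$, \[ \lim_{n\to\infty}\mathbb{E}_{\mathbf{A}\in\mathcal{T}^{\eta}_{n\times k}}\big(p_e(\mathbf{A})\big)=0 . \]
   Context: $h(\epsilon)=-\epsilon\log_2\epsilon-(1-\epsilon)\log_2(1-\epsilon)$. All arithmetic is in $\mathrm{GF}(2)$. For a generating matrix $\mathbf{A}\in\{0,1\}^{n\times k}$, over the BSC the output is $Y=\mathbf{A}X+N$ with $X$ uniform on $\{0,1\}^k$ and $N$ having i.i.d. Bernoulli$(\epsilon)$ entries independent of $X$. The decoder outputs $\hat X$ drawn from the posterior $\mathbb{P}(X=\cdot\mid Y=y)$; $p_c(\mathbf{A})=\mathbb{E}_{X,Y}[\mathbb{P}(X\mid Y)]$ and $p_e(\mathbf{A})=1-p_c(\mathbf{A})$. $\mathcal{A}_{n\times k}$ is the set of binary $n\times k$ matrices, and the Bernoulli$(n,k,\rho)$ distribution on it makes all entries i.i.d. Bernoulli$(\rho)$. *)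

theory Defs
  imports Complex_Main
begin

definition bin_entropy :: "real \<Rightarrow> real" where
  "bin_entropy e = - e * log 2 e - (1 - e) * log 2 (1 - e)"

text \<open>Binary vectors of length m, encoded as functions on nat that are False outside {0..<m}.\<close>
definition bvecs :: "nat \<Rightarrow> (nat \<Rightarrow> bool) set" where
  "bvecs m = {x. \<forall>i. m \<le> i \<longrightarrow> \<not> x i}"

definition bmats :: "nat \<Rightarrow> nat \<Rightarrow> (nat \<Rightarrow> nat \<Rightarrow> bool) set" where
  "bmats n k = {A. \<forall>i j. (n \<le> i \<or> k \<le> j) \<longrightarrow> \<not> A i j}"

definition gf2_mult :: "nat \<Rightarrow> nat \<Rightarrow> (nat \<Rightarrow> nat \<Rightarrow> bool) \<Rightarrow> (nat \<Rightarrow> bool) \<Rightarrow> (nat \<Rightarrow> bool)" where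
  "gf2_mult n k A x = (\<lambda>i. i < n \<and> odd (card {j. j < k \<and> A i j \<and> x j}))"

definition hamming :: "nat \<Rightarrow> (nat \<Rightarrow> bool) \<Rightarrow> (nat \<Rightarrow> bool) \<Rightarrow> nat" where
  "hamming n u v = card {i. i < n \<and> u i \<noteq> v i}"

text \<open>BSC transition probability P(Y = y | X = x) for Y = A x + N, N iid Bernoulli(e).\<close>
definition bsc_lik :: "real \<Rightarrow> nat \<Rightarrow> nat \<Rightarrow> (nat \<Rightarrow> nat \<Rightarrow> bool) \<Rightarrow> (nat \<Rightarrow> bool) \<Rightarrow> (nat \<Rightarrow> bool) \<Rightarrow> real" where
  "bsc_lik e n k A x y =
     (let d = hamming n (gf2_mult n k A x) y in e ^ d * (1 - e) ^ (n - d))"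

text \<open>Joint law P(X = x, Y = y) with X uniform on {0,1}^k.\<close>
definition joint_prob :: "real \<Rightarrow> nat \<Rightarrow> nat \<Rightarrow> (nat \<Rightarrow> nat \<Rightarrow> bool) \<Rightarrow> (nat \<Rightarrow> bool) \<Rightarrow> (nat \<Rightarrow> bool) \<Rightarrow> real" where
  "joint_prob e n k A x y = bsc_lik e n k A x y / 2 ^ k"

definition out_prob :: "real \<Rightarrow> nat \<Rightarrow> nat \<Rightarrow> (nat \<Rightarrow> nat \<Rightarrow> bool) \<Rightarrow> (nat \<Rightarrow> bool) \<Rightarrow> real" where
  "out_prob e n k A y = (\<Sum>x\<in>bvecs k. joint_prob e n k A x y)"

definition posterior :: "real \<Rightarrow> nat \<Rightarrow> nat \<Rightarrow> (nat \<Rightarrow> nat \<Rightarrow> bool) \<Rightarrow> (nat \<Rightarrow> bool) \<Rightarrow> (nat \<Rightarrow> bool) \<Rightarrow> real" where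
  "posterior e n k A x y = joint_prob e n k A x y / out_prob e n k A y"

definition prob_correct :: "real \<Rightarrow> nat \<Rightarrow> nat \<Rightarrow> (nat \<Rightarrow> nat \<Rightarrow> bool) \<Rightarrow> real" where
  "prob_correct e n k A =
     (\<Sum>x\<in>bvecs k. \<Sum>y\<in>bvecs n. joint_prob e n k A x y * posterior e n k A x y)"

definition prob_error :: "real \<Rightarrow> nat \<Rightarrow> nat \<Rightarrow> (nat \<Rightarrow> nat \<Rightarrow> bool) \<Rightarrow> real" where
  "prob_error e n k A = 1 - prob_correct e n k A"

definition mat_weight :: "nat \<Rightarrow> nat \<Rightarrow> (nat \<Rightarrow> nat \<Rightarrow> bool) \<Rightarrow> nat" where
  "mat_weight n k A = card {(i, j). i < n \<and> j < k \<and> A i j}"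

definition bern_mat_prob :: "real \<Rightarrow> nat \<Rightarrow> nat \<Rightarrow> (nat \<Rightarrow> nat \<Rightarrow> bool) \<Rightarrow> real" where
  "bern_mat_prob \<rho> n k A = \<rho> ^ mat_weight n k A * (1 - \<rho>) ^ (n * k - mat_weight n k A)"

definition typical_mats :: "real \<Rightarrow> real \<Rightarrow> nat \<Rightarrow> nat \<Rightarrow> (nat \<Rightarrow> nat \<Rightarrow> bool) set" where
  "typical_mats \<rho> \<eta> n k =
     {A \<in> bmats n k. \<bar>real (mat_weight n k A) / real (n * k) - \<rho>\<bar> < \<eta>}"

definition typical_avg_error :: "real \<Rightarrow> real \<Rightarrow> real \<Rightarrow> nat \<Rightarrow> nat \<Rightarrow> real" where
  "typical_avg_error e \<rho> \<eta> n k =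
     (\<Sum>A\<in>typical_mats \<rho> \<eta> n k. bern_mat_prob \<rho> n k A * prob_error e n k A)
     / (\<Sum>A\<in>typical_mats \<rho> \<eta> n k. bern_mat_prob \<rho> n k A)"

end

theory Submission
  imports Defs
begin


definition FS :: "nat \<Rightarrow> 'a set \<Rightarrow> 'a \<Rightarrow> (nat \<Rightarrow> 'a) set" where
  "FS n S d = {f. (\<forall>i<n. f i \<in> S) \<and> (\<forall>i. n \<le> i \<longrightarrow> f i = d)}"

lemma FS_0: "FS 0 S d = {\<lambda>_. d}"
  unfolding FS_def by auto

lemma FS_Suc: "FS (Suc n) S d = (\<lambda>(f,s). f(n:=s)) ` (FS n S d \<times> S)"
proof (rule set_eqI, rule iffI)
  fix g assume g: "g \<in> FS (Suc n) S d"
  have "g = (g(n:=d))(n := g n)" by simp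
  moreover have "g(n:=d) \<in> FS n S d" using g unfolding FS_def
    by (auto simp: le_Suc_eq)
  moreover have "g n \<in> S" using g unfolding FS_def by auto
  ultimately show "g \<in> (\<lambda>(f,s). f(n:=s)) ` (FS n S d \<times> S)"
    by (intro image_eqI[where x="(g(n:=d), g n)"]) auto
next
  fix g assume "g \<in> (\<lambda>(f,s). f(n:=s)) ` (FS n S d \<times> S)"
  then show "g \<in> FS (Suc n) S d" unfolding FS_def by (auto simp: less_Suc_eq)
qed

lemma FS_inj: "inj_on (\<lambda>(f,s). f(n:=s)) (FS n S d \<times> S)"
proof (rule inj_onI, clarsimp)
  fix f s f' s' assume f: "f \<in> FS n S d" "f' \<in> FS n S d" and eq: "f(n:=s) = f'(n:=s')"
  have "s = s'" using fun_cong[OF eq, of n] by simp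
  moreover have "f = f'"
  proof
    fix i show "f i = f' i"
    proof (cases "i = n")
      case True thus ?thesis using f unfolding FS_def by auto
    next
      case False thus ?thesis using fun_cong[OF eq, of i] by simp
    qed
  qed
  ultimately show "f = f' \<and> s = s'" by simp
qed

lemma finite_FS: "finite S \<Longrightarrow> finite (FS n S d)"
  by (induction n) (auto simp: FS_0 FS_Suc)

lemma sum_prod_FS:
  assumes "finite S"
  shows "(\<Sum>f\<in>FS n S d. \<Prod>i<n. g i (f i)) = (\<Prod>i<n. \<Sum>s\<in>S. (g i s::real))"
proof (induction n)
  case 0 thus ?case by (simp add: FS_0)
next
  case (Suc n)
  have "(\<Sum>f\<in>FS (Suc n) S d. \<Prod>i<Suc n. g i (f i))
      = (\<Sum>p\<in>FS n S d \<times> S. \<Prod>i<Suc n. g i (((\<lambda>(f,s). f(n:=s)) p) i))"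
    unfolding FS_Suc by (rule sum.reindex[OF FS_inj, unfolded comp_def])
  also have "\<dots> = (\<Sum>p\<in>FS n S d \<times> S. (\<Prod>i<n. g i (fst p i)) * g n (snd p))"
    by (rule sum.cong) (auto intro!: prod.cong)
  also have "\<dots> = (\<Sum>f\<in>FS n S d. \<Sum>s\<in>S. (\<Prod>i<n. g i (f i)) * g n s)"
    by (simp add: sum.cartesian_product case_prod_beta)
  also have "\<dots> = (\<Sum>f\<in>FS n S d. (\<Prod>i<n. g i (f i))) * (\<Sum>s\<in>S. g n s)"
    by (rule sum_product[symmetric])
  also have "\<dots> = (\<Prod>i<Suc n. \<Sum>s\<in>S. g i s)" using Suc by simp
  finally show ?case .
qed

lemma bvecs_FS: "bvecs n = FS n UNIV False"
  unfolding bvecs_def FS_def by auto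

lemma bmats_FS: "bmats n k = FS n (bvecs k) (\<lambda>_. False)"
proof (rule set_eqI, rule iffI)
  fix A assume "A \<in> bmats n k"
  thus "A \<in> FS n (bvecs k) (\<lambda>_. False)" unfolding bmats_def FS_def bvecs_def by auto
next
  fix A assume A: "A \<in> FS n (bvecs k) (\<lambda>_. False)"
  show "A \<in> bmats n k" unfolding bmats_def
  proof (intro CollectI allI impI)
    fix i j assume "n \<le> i \<or> k \<le> j"
    thus "\<not> A i j"
    proof
      assume "n \<le> i" thus ?thesis using A unfolding FS_def by auto
    next
      assume kj: "k \<le> j"
      show ?thesis
      proof (cases "i < n")
        case True thus ?thesis using A kj unfolding FS_def bvecs_def by auto
      next
        case False thus ?thesis using A unfolding FS_def by auto
      qed
    qed
  qed
qed

lemma finite_bvecs: "finite (bvecs n)"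
  unfolding bvecs_FS by (rule finite_FS) simp

lemma finite_bmats: "finite (bmats n k)"
  unfolding bmats_FS by (rule finite_FS[OF finite_bvecs])

lemma sum_bvecs_prod:
  "(\<Sum>y\<in>bvecs n. \<Prod>i<n. g i (y i)) = (\<Prod>i<n. g i True + g i False :: real)"
  unfolding bvecs_FS by (subst sum_prod_FS) (auto simp: UNIV_bool add.commute)

lemma sum_bmats_prod:
  "(\<Sum>A\<in>bmats n k. \<Prod>i<n. g i (A i)) = (\<Prod>i<n. \<Sum>v\<in>bvecs k. (g i v :: real))"
  unfolding bmats_FS by (rule sum_prod_FS[OF finite_bvecs])

lemma card_bvecs: "card (bvecs n) = 2^n"
proof -
  have "real (card (bvecs n)) = (\<Sum>y\<in>bvecs n. \<Prod>i<n. (\<lambda>i b. 1::real) i (y i))" by simp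
  also have "\<dots> = 2^n" by (subst sum_bvecs_prod) simp
  finally have "real (card (bvecs n)) = real ((2::nat)^n)" by simp
  thus ?thesis by (simp only: of_nat_eq_iff)
qed

lemma pow_card_prod:
  "(\<Prod>i<n. if P i then a else b) = a ^ card {i. i<n \<and> P i} * b ^ (n - card {i. i<n \<and> P i})"
proof -
  have "(\<Prod>i<n. if P i then a else b) = (\<Prod>i\<in>{..<n} \<inter> {i. P i}. a) * (\<Prod>i\<in>{..<n} \<inter> - {i. P i}. b)"
    by (rule prod.If_cases) simp
  moreover have "{..<n} \<inter> {i. P i} = {i. i<n \<and> P i}" by auto
  moreover have "card ({..<n} \<inter> - {i. P i}) = n - card {i. i<n \<and> P i}"
  proof -
    have eq: "{..<n} \<inter> - {i. P i} = {..<n} - {i. i<n \<and> P i}" by auto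
    have "card ({..<n} - {i. i<n \<and> P i}) = n - card {i. i<n \<and> P i}"
      by (subst card_Diff_subset) auto
    thus ?thesis using eq by simp
  qed
  ultimately show ?thesis by simp
qed



lemma pow_card_prod_set:
  assumes "finite I"
  shows "(\<Prod>i\<in>I. if P i then a else b) = a ^ card {i\<in>I. P i} * b ^ (card I - card {i\<in>I. P i})"
proof -
  have "(\<Prod>i\<in>I. if P i then a else b) = (\<Prod>i\<in>I \<inter> {i. P i}. a) * (\<Prod>i\<in>I \<inter> - {i. P i}. b)"
    by (rule prod.If_cases) (rule assms)
  moreover have "I \<inter> {i. P i} = {i\<in>I. P i}" by auto
  moreover have "card (I \<inter> - {i. P i}) = card I - card {i\<in>I. P i}"
  proof -
    have eq: "I \<inter> - {i. P i} = I - {i\<in>I. P i}" by auto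
    have "card (I - {i\<in>I. P i}) = card I - card {i\<in>I. P i}"
      by (subst card_Diff_subset) (auto intro: finite_subset[OF _ assms])
    thus ?thesis using eq by simp
  qed
  ultimately show ?thesis by simp
qed

lemma ham_prod: "a ^ hamming n u v = (\<Prod>i<n. if u i \<noteq> v i then a else 1)"
  unfolding hamming_def by (simp add: pow_card_prod)

lemma hamming_le: "hamming n u v \<le> n"
proof -
  have "{i. i < n \<and> u i \<noteq> v i} \<subseteq> {..<n}" by auto
  thus ?thesis unfolding hamming_def by (metis card_lessThan card_mono finite_lessThan)
qed

lemma bsc_prod:
  "bsc_lik e n k A x y = (\<Prod>i<n. if gf2_mult n k A x i \<noteq> y i then e else 1 - e)"
  unfolding bsc_lik_def hamming_def Let_def by (simp add: pow_card_prod)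

lemma bsc_r:
  assumes "0 < e" "e < 1"
  shows "bsc_lik e n k A x y = (1 - e) ^ n * (e / (1 - e)) ^ hamming n (gf2_mult n k A x) y"
proof -
  define d where "d = hamming n (gf2_mult n k A x) y"
  have dn: "d \<le> n" unfolding d_def by (rule hamming_le)
  have "(1 - e) ^ n = (1 - e) ^ d * (1 - e) ^ (n - d)"
    using dn by (simp flip: power_add)
  moreover have "(e / (1 - e)) ^ d = e ^ d / (1 - e) ^ d" by (simp add: power_divide)
  ultimately have "(1 - e) ^ n * (e / (1 - e)) ^ d = e ^ d * (1 - e) ^ (n - d)"
    using assms by simp
  thus ?thesis unfolding bsc_lik_def Let_def d_def[symmetric] by simp
qed

lemma bsc_pos: "0 < e \<Longrightarrow> e < 1 \<Longrightarrow> 0 < bsc_lik e n k A x y"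
  by (simp add: bsc_r)

lemma sum_bsc: "(\<Sum>y\<in>bvecs n. bsc_lik e n k A x y) = 1"
  unfolding bsc_prod by (subst sum_bvecs_prod) (simp add: prod.neutral)

lemma sum_bvecs_pair:
  "(\<Sum>y\<in>bvecs n. \<Prod>i<n. W (c i) (c' i) (y i)) = (\<Prod>i<n. W (c i) (c' i) True + W (c i) (c' i) False :: real)"
  by (rule sum_bvecs_prod)

lemma sum_joint: "(\<Sum>x\<in>bvecs k. \<Sum>y\<in>bvecs n. joint_prob e n k A x y) = 1"
proof -
  have "(\<Sum>x\<in>bvecs k. \<Sum>y\<in>bvecs n. joint_prob e n k A x y) = (\<Sum>x\<in>bvecs k. 1 / 2 ^ k)"
    unfolding joint_prob_def by (simp add: sum_divide_distrib[symmetric] sum_bsc)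
  also have "\<dots> = 1" by (simp add: card_bvecs)
  finally show ?thesis .
qed

lemma pe_eq: "prob_error e n k A =
   (\<Sum>x\<in>bvecs k. \<Sum>y\<in>bvecs n. joint_prob e n k A x y * (1 - posterior e n k A x y))"
  unfolding prob_error_def prob_correct_def
  by (simp add: algebra_simps sum_subtractf sum_joint)

lemma out_prob_ge:
  assumes "0 < e" "e < 1" "x \<in> bvecs k"
  shows "joint_prob e n k A x y \<le> out_prob e n k A y"
  unfolding out_prob_def
  by (rule member_le_sum[OF assms(3)]) (auto simp: joint_prob_def bsc_pos[OF assms(1,2)] less_imp_le finite_bvecs)

lemma joint_pos: "0 < e \<Longrightarrow> e < 1 \<Longrightarrow> 0 < joint_prob e n k A x y"
  by (simp add: joint_prob_def bsc_pos)

lemma posterior_le1: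
  assumes "0 < e" "e < 1" "x \<in> bvecs k"
  shows "posterior e n k A x y \<le> 1"
proof -
  have p: "0 < joint_prob e n k A x y" by (rule joint_pos[OF assms(1,2)])
  have o: "joint_prob e n k A x y \<le> out_prob e n k A y" by (rule out_prob_ge[OF assms])
  show ?thesis using p o unfolding posterior_def by (auto simp: divide_le_eq_1)
qed

lemma pe_nonneg:
  assumes "0 < e" "e < 1"
  shows "0 \<le> prob_error e n k A"
  unfolding pe_eq
  by (intro sum_nonneg mult_nonneg_nonneg) (auto simp: posterior_le1[OF assms] joint_pos[OF assms] less_imp_le)



definition Sm :: "nat \<Rightarrow> real \<Rightarrow> (nat \<Rightarrow> bool) \<Rightarrow> (nat \<Rightarrow> bool) set" where
  "Sm k dl x = {x'\<in>bvecs k. x' \<noteq> x \<and> real (hamming k x x') \<le> dl * real k}"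

definition Lg :: "nat \<Rightarrow> real \<Rightarrow> (nat \<Rightarrow> bool) \<Rightarrow> (nat \<Rightarrow> bool) set" where
  "Lg k dl x = {x'\<in>bvecs k. real (hamming k x x') > dl * real k}"

lemma Sm_Lg_part:
  assumes "0 \<le> dl"
  shows "bvecs k - {x} = Sm k dl x \<union> Lg k dl x" "Sm k dl x \<inter> Lg k dl x = {}"
proof -
  have "hamming k x x = 0" unfolding hamming_def by simp
  moreover have "0 \<le> dl * real k" using assms by simp
  ultimately show "bvecs k - {x} = Sm k dl x \<union> Lg k dl x"
    unfolding Sm_def Lg_def using assms by (auto simp: not_le mult_less_0_iff)
  show "Sm k dl x \<inter> Lg k dl x = {}" unfolding Sm_def Lg_def by auto
qed

lemma finite_Sm: "finite (Sm k dl x)" unfolding Sm_def by (auto intro: finite_subset[OF _ finite_bvecs])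
lemma finite_Lg: "finite (Lg k dl x)" unfolding Lg_def by (auto intro: finite_subset[OF _ finite_bvecs])

lemma sqrt_bound:
  fixes u v S :: real
  assumes "0 < u" "0 < v" "u \<le> S" "v \<le> S"
  shows "v * u / S \<le> v * sqrt (u / v)"
proof -
  have "u / S \<le> sqrt (u / v)"
  proof (cases "u \<le> v")
    case True
    have "u / S \<le> u / v" using assms by (intro divide_left_mono) auto
    also have "\<dots> \<le> sqrt (u / v)"
    proof -
      define w where "w = sqrt (u / v)"
      have q: "0 \<le> u / v" "u / v \<le> 1" using True assms by auto
      have w: "0 \<le> w" "w \<le> 1" unfolding w_def using q by auto
      have "w * w = \<bar>u / v\<bar>" unfolding w_def by (rule real_sqrt_mult_self)
      hence "u / v = w * w" using q assms by simp
      also have "\<dots> \<le> w" using w by (simp add: mult_left_le)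
      finally show ?thesis unfolding w_def .
    qed
    finally show ?thesis .
  next
    case False
    have "u / S \<le> 1" using assms by (simp add: divide_le_eq_1)
    also have "1 \<le> sqrt (u / v)" using False assms by simp
    finally show ?thesis .
  qed
  thus ?thesis using assms by (metis mult_left_mono less_imp_le times_divide_eq_right)
qed

lemma min_bound:
  fixes v L S :: real
  assumes "0 < v" "0 \<le> L" "v \<le> S" "L \<le> S"
  shows "v * L / S \<le> v" "v * L / S \<le> L"
proof -
  have S: "0 < S" using assms by simp
  show "v * L / S \<le> v" using assms S by (simp add: divide_le_eq mult_left_mono)
  have "L * v \<le> L * S" by (rule mult_left_mono) (use assms in auto)
  thus "v * L / S \<le> L" using S by (simp add: divide_le_eq mult.commute)
qed

lemma point_bound:
  fixes e s t dl :: real and n k :: nat and A :: "nat \<Rightarrow> nat \<Rightarrow> bool" and x y :: "nat \<Rightarrow> bool"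
  assumes e: "0 < e" "e < 1/2" and s: "1 < s" and x: "x \<in> bvecs k" and dl: "0 \<le> dl"
  defines "r \<equiv> e / (1 - e)"
  defines "b \<equiv> \<lambda>x'. bsc_lik e n k A x' y"
  defines "d \<equiv> \<lambda>x'. hamming n (gf2_mult n k A x') y"
  shows "joint_prob e n k A x y * (1 - posterior e n k A x y)
    \<le> ((\<Sum>x'\<in>Sm k dl x. b x * sqrt r ^ d x' / sqrt r ^ d x)
        + b x * s ^ d x * s powr (- t)
        + r powr (- t) * (\<Sum>x'\<in>Lg k dl x. b x * r ^ d x')) / 2 ^ k"
proof -
  have e1: "e < 1" using e by simp
  have r0: "0 < r" and r1: "r < 1" using e unfolding r_def by (auto simp: divide_less_eq)
  have bpos: "\<And>x'. 0 < b x'" unfolding b_def by (rule bsc_pos[OF e(1) e1])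
  have br: "\<And>x'. b x' = (1 - e) ^ n * r ^ d x'" unfolding b_def d_def r_def by (rule bsc_r[OF e(1) e1])
  define Sb where "Sb = (\<Sum>x'\<in>bvecs k. b x')"
  have fin: "finite (bvecs k)" by (rule finite_bvecs)
  have Sb_split: "Sb = b x + (\<Sum>x'\<in>Sm k dl x. b x') + (\<Sum>x'\<in>Lg k dl x. b x')"
  proof -
    have "Sb = b x + (\<Sum>x'\<in>bvecs k - {x}. b x')"
      unfolding Sb_def using x fin by (simp add: sum.remove)
    also have "(\<Sum>x'\<in>bvecs k - {x}. b x') = (\<Sum>x'\<in>Sm k dl x. b x') + (\<Sum>x'\<in>Lg k dl x. b x')"
      unfolding Sm_Lg_part(1)[OF dl] by (rule sum.union_disjoint[OF finite_Sm finite_Lg Sm_Lg_part(2)[OF dl]])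
    finally show ?thesis by simp
  qed
  have SmS: "(\<Sum>x'\<in>Sm k dl x. b x') \<ge> 0" "(\<Sum>x'\<in>Lg k dl x. b x') \<ge> 0"
    using bpos by (auto intro: sum_nonneg less_imp_le)
  have Sbpos: "0 < Sb" using Sb_split SmS bpos[of x] by simp
  have post: "posterior e n k A x y = b x / Sb"
    unfolding posterior_def joint_prob_def out_prob_def Sb_def b_def
    by (simp add: sum_divide_distrib[symmetric])
  have lhs: "joint_prob e n k A x y * (1 - posterior e n k A x y)
     = (b x * (\<Sum>x'\<in>Sm k dl x. b x') / Sb + b x * (\<Sum>x'\<in>Lg k dl x. b x') / Sb) / 2 ^ k"
  proof -
    have jp: "joint_prob e n k A x y = b x / 2 ^ k" unfolding joint_prob_def b_def by simp
    have eq1: "1 - b x / Sb = ((\<Sum>x'\<in>Sm k dl x. b x') + (\<Sum>x'\<in>Lg k dl x. b x')) / Sb"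
      using Sbpos Sb_split by (simp add: field_simps)
    have "joint_prob e n k A x y * (1 - posterior e n k A x y)
       = b x / 2 ^ k * (((\<Sum>x'\<in>Sm k dl x. b x') + (\<Sum>x'\<in>Lg k dl x. b x')) / Sb)"
      unfolding post jp eq1 ..
    also have "\<dots> = (b x * (\<Sum>x'\<in>Sm k dl x. b x') / Sb + b x * (\<Sum>x'\<in>Lg k dl x. b x') / Sb) / 2 ^ k"
      by (simp add: algebra_simps add_divide_distrib)
    finally show ?thesis .
  qed
  have P1: "b x * (\<Sum>x'\<in>Sm k dl x. b x') / Sb \<le> (\<Sum>x'\<in>Sm k dl x. b x * sqrt r ^ d x' / sqrt r ^ d x)"
  proof -
    have "b x * (\<Sum>x'\<in>Sm k dl x. b x') / Sb = (\<Sum>x'\<in>Sm k dl x. b x * b x' / Sb)"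
      by (simp add: sum_distrib_left sum_divide_distrib)
    also have "\<dots> \<le> (\<Sum>x'\<in>Sm k dl x. b x * sqrt r ^ d x' / sqrt r ^ d x)"
    proof (rule sum_mono)
      fix x' assume xs: "x' \<in> Sm k dl x"
      have le1: "b x' \<le> Sb"
      proof -
        have "b x' \<le> (\<Sum>x'\<in>bvecs k. b x')"
          using xs bpos unfolding Sm_def by (intro member_le_sum) (auto intro: less_imp_le fin)
        thus ?thesis unfolding Sb_def .
      qed
      have le2: "b x \<le> Sb" using x bpos unfolding Sb_def by (intro member_le_sum) (auto intro: less_imp_le fin)
      have "b x * b x' / Sb \<le> b x * sqrt (b x' / b x)"
        by (rule sqrt_bound[OF bpos bpos le1 le2])
      also have "b x' / b x = r ^ d x' / r ^ d x"
        unfolding br using e1 by simp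
      also have "sqrt (r ^ d x' / r ^ d x) = sqrt r ^ d x' / sqrt r ^ d x"
        by (simp add: real_sqrt_divide real_sqrt_power)
      finally show "b x * b x' / Sb \<le> b x * sqrt r ^ d x' / sqrt r ^ d x" by simp
    qed
    finally show ?thesis .
  qed
  define L where "L = (\<Sum>x'\<in>Lg k dl x. b x')"
  have L0: "0 \<le> L" unfolding L_def using SmS by simp
  have vS: "b x \<le> Sb" and LS: "L \<le> Sb" using Sb_split SmS L0 bpos[of x] unfolding L_def by auto
  have T2nn: "0 \<le> b x * s ^ d x * s powr (- t)" using bpos[of x] s by simp
  have T3nn: "0 \<le> r powr (- t) * (\<Sum>x'\<in>Lg k dl x. b x * r ^ d x')"
    using bpos r0 by (intro mult_nonneg_nonneg sum_nonneg) (auto intro: less_imp_le)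
  have P2: "b x * L / Sb \<le> b x * s ^ d x * s powr (- t) + r powr (- t) * (\<Sum>x'\<in>Lg k dl x. b x * r ^ d x')"
  proof (cases "real (d x) > t")
    case True
    have "1 \<le> s powr (real (d x) - t)" using True s by (simp add: ge_one_powr_ge_zero)
    also have "s powr (real (d x) - t) = s ^ d x * s powr (- t)"
      using s by (simp add: powr_diff powr_realpow powr_minus divide_inverse)
    finally have "b x * 1 \<le> b x * (s ^ d x * s powr (- t))" using bpos[of x]
      by (intro mult_left_mono) auto
    hence "b x \<le> b x * s ^ d x * s powr (- t)" by (simp add: mult.assoc)
    thus ?thesis using min_bound(1)[OF bpos L0 vS LS] T3nn by linarith
  next
    case False
    have "r powr 0 \<le> r powr (real (d x) - t)" using False r0 r1
      by (intro powr_mono') auto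
    hence "1 \<le> r powr (real (d x) - t)" using r0 by simp
    also have "r powr (real (d x) - t) = r ^ d x * r powr (- t)"
      using r0 by (simp add: powr_diff powr_realpow powr_minus divide_inverse)
    finally have rr: "1 \<le> r ^ d x * r powr (- t)" .
    have "L = (\<Sum>x'\<in>Lg k dl x. (1 - e) ^ n * r ^ d x')" unfolding L_def br ..
    also have "\<dots> \<le> (\<Sum>x'\<in>Lg k dl x. (1 - e) ^ n * r ^ d x' * (r ^ d x * r powr (- t)))"
    proof (rule sum_mono)
      fix x' have "0 \<le> (1 - e) ^ n * r ^ d x'" using r0 e1 by simp
      thus "(1 - e) ^ n * r ^ d x' \<le> (1 - e) ^ n * r ^ d x' * (r ^ d x * r powr (- t))"
        using rr by (metis mult_left_mono mult.right_neutral)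
    qed
    also have "\<dots> = r powr (- t) * (\<Sum>x'\<in>Lg k dl x. b x * r ^ d x')"
      unfolding br by (simp add: sum_distrib_left mult_ac)
    finally show ?thesis using min_bound(2)[OF bpos L0 vS LS] T2nn by linarith
  qed
  show ?thesis unfolding lhs using P1 P2 unfolding L_def
    by (simp add: divide_right_mono)
qed



definition rowp :: "real \<Rightarrow> nat \<Rightarrow> (nat \<Rightarrow> bool) \<Rightarrow> real" where
  "rowp \<rho> k v = (\<Prod>j<k. if v j then \<rho> else 1 - \<rho>)"

lemma bern_prod: "bern_mat_prob \<rho> n k A = (\<Prod>i<n. rowp \<rho> k (A i))"
proof -
  have fin: "finite ({..<n} \<times> {..<k})" by simp
  have W: "mat_weight n k A = card {p \<in> {..<n} \<times> {..<k}. A (fst p) (snd p)}"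
    unfolding mat_weight_def by (rule arg_cong[where f=card]) auto
  have "(\<Prod>i<n. rowp \<rho> k (A i)) = (\<Prod>p\<in>{..<n} \<times> {..<k}. if A (fst p) (snd p) then \<rho> else 1 - \<rho>)"
    unfolding rowp_def by (subst prod.cartesian_product) (simp add: case_prod_beta)
  also have "\<dots> = bern_mat_prob \<rho> n k A"
    unfolding pow_card_prod_set[OF fin] bern_mat_prob_def W by (simp add: card_cartesian_product)
  finally show ?thesis by simp
qed

lemma parity_eq:
  fixes v x x' :: "nat \<Rightarrow> bool"
  shows "(odd (card {j. j < k \<and> v j \<and> x j}) = odd (card {j. j < k \<and> v j \<and> x' j}))
     \<longleftrightarrow> even (card {j. j < k \<and> v j \<and> x j \<noteq> x' j})"
proof -
  define S where "S = {j. j < k \<and> v j \<and> x j}"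
  define T where "T = {j. j < k \<and> v j \<and> x' j}"
  have fS: "finite S" and fT: "finite T" unfolding S_def T_def by auto
  have D: "{j. j < k \<and> v j \<and> x j \<noteq> x' j} = (S \<union> T) - (S \<inter> T)" unfolding S_def T_def by auto
  have "card ((S \<union> T) - (S \<inter> T)) = card (S \<union> T) - card (S \<inter> T)"
    by (rule card_Diff_subset) (use fS fT in auto)
  moreover have "card S + card T = card (S \<union> T) + card (S \<inter> T)" by (rule card_Un_Int[OF fS fT])
  moreover have "card (S \<inter> T) \<le> card (S \<union> T)" by (rule card_mono) (use fS fT in auto)
  ultimately have "card S + card T = card {j. j < k \<and> v j \<and> x j \<noteq> x' j} + 2 * card (S \<inter> T)"
    unfolding D by simp
  hence "even (card S + card T) \<longleftrightarrow> even (card {j. j < k \<and> v j \<and> x j \<noteq> x' j})" by simp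
  thus ?thesis unfolding S_def[symmetric] T_def[symmetric] by auto
qed

lemma row_sum_one: "(\<Sum>v\<in>bvecs k. rowp \<rho> k v) = 1"
  unfolding rowp_def by (subst sum_bvecs_prod) simp

lemma row_sign: "(\<Sum>v\<in>bvecs k. rowp \<rho> k v * (\<Prod>j<k. if v j \<and> x j \<noteq> x' j then -1 else 1))
   = (1 - 2 * \<rho>) ^ hamming k x x'"
proof -
  have "(\<Sum>v\<in>bvecs k. rowp \<rho> k v * (\<Prod>j<k. if v j \<and> x j \<noteq> x' j then -1 else 1))
     = (\<Sum>v\<in>bvecs k. \<Prod>j<k. (if v j then \<rho> else 1 - \<rho>) * (if v j \<and> x j \<noteq> x' j then -1 else 1))"
    unfolding rowp_def by (simp add: prod.distrib)
  also have "\<dots> = (\<Prod>j<k. if x j \<noteq> x' j then 1 - 2 * \<rho> else 1)"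
    by (subst sum_bvecs_prod) (rule prod.cong, auto)
  also have "\<dots> = (1 - 2 * \<rho>) ^ hamming k x x'" by (simp add: ham_prod)
  finally show ?thesis .
qed

lemma row_expect:
  "(\<Sum>v\<in>bvecs k. rowp \<rho> k v *
      (if odd (card {j. j < k \<and> v j \<and> x j}) = odd (card {j. j < k \<and> v j \<and> x' j}) then P else Q))
   = (P + Q) / 2 + (P - Q) / 2 * (1 - 2 * \<rho>) ^ hamming k x x'"
proof -
  have sg: "\<And>v. (\<Prod>j<k. if v j \<and> x j \<noteq> x' j then -1 else 1::real)
       = (-1) ^ card {j. j < k \<and> v j \<and> x j \<noteq> x' j}"
    by (simp add: pow_card_prod)
  have eq: "\<And>v. (if odd (card {j. j < k \<and> v j \<and> x j}) = odd (card {j. j < k \<and> v j \<and> x' j}) then P else Q)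
      = (P + Q) / 2 + (P - Q) / 2 * (\<Prod>j<k. if v j \<and> x j \<noteq> x' j then -1 else 1)"
    unfolding sg parity_eq by (auto simp: field_simps)
  define \<sigma> where "\<sigma> = (\<lambda>v. (\<Prod>j<k. if v j \<and> x j \<noteq> x' j then -1 else 1::real))"
  have "(\<Sum>v\<in>bvecs k. rowp \<rho> k v * ((P + Q) / 2 + (P - Q) / 2 * \<sigma> v))
      = (P + Q) / 2 * (\<Sum>v\<in>bvecs k. rowp \<rho> k v) + (P - Q) / 2 * (\<Sum>v\<in>bvecs k. rowp \<rho> k v * \<sigma> v)"
  proof -
    define a where "a = (P + Q) / 2"
    define c where "c = (P - Q) / 2"
    have "\<And>v. rowp \<rho> k v * (a + c * \<sigma> v) = a * rowp \<rho> k v + c * (rowp \<rho> k v * \<sigma> v)"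
      by (simp add: algebra_simps)
    hence "(\<Sum>v\<in>bvecs k. rowp \<rho> k v * (a + c * \<sigma> v)) = (\<Sum>v\<in>bvecs k. a * rowp \<rho> k v + c * (rowp \<rho> k v * \<sigma> v))"
      by simp
    also have "\<dots> = a * (\<Sum>v\<in>bvecs k. rowp \<rho> k v) + c * (\<Sum>v\<in>bvecs k. rowp \<rho> k v * \<sigma> v)"
      by (simp add: sum.distrib sum_distrib_left)
    finally show ?thesis unfolding a_def c_def .
  qed
  also have "\<dots> = (P + Q) / 2 + (P - Q) / 2 * (1 - 2 * \<rho>) ^ hamming k x x'"
    unfolding row_sum_one \<sigma>_def row_sign by simp
  finally show ?thesis unfolding eq \<sigma>_def .
qed

lemma mat_expect:
  "(\<Sum>A\<in>bmats n k. bern_mat_prob \<rho> n k A *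
      (\<Prod>i<n. if gf2_mult n k A x i = gf2_mult n k A x' i then P else Q))
   = ((P + Q) / 2 + (P - Q) / 2 * (1 - 2 * \<rho>) ^ hamming k x x') ^ n"
proof -
  have "(\<Sum>A\<in>bmats n k. bern_mat_prob \<rho> n k A *
      (\<Prod>i<n. if gf2_mult n k A x i = gf2_mult n k A x' i then P else Q))
    = (\<Sum>A\<in>bmats n k. \<Prod>i<n. rowp \<rho> k (A i) *
      (if odd (card {j. j < k \<and> A i j \<and> x j}) = odd (card {j. j < k \<and> A i j \<and> x' j}) then P else Q))"
    unfolding bern_prod prod.distrib[symmetric] gf2_mult_def
    by (intro sum.cong refl prod.cong) auto
  also have "\<dots> = ((P + Q) / 2 + (P - Q) / 2 * (1 - 2 * \<rho>) ^ hamming k x x') ^ n"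
    by (subst sum_bmats_prod) (simp only: row_expect prod_constant card_lessThan)
  finally show ?thesis .
qed

lemma bern_sum_one: "(\<Sum>A\<in>bmats n k. bern_mat_prob \<rho> n k A) = 1"
  using mat_expect[of \<rho> n k x x 1 1] by simp

lemma bern_nonneg: "0 \<le> \<rho> \<Longrightarrow> \<rho> \<le> 1 \<Longrightarrow> 0 \<le> bern_mat_prob \<rho> n k A"
  unfolding bern_mat_prob_def by simp

lemma bern_weight_mgf:
  "(\<Sum>A\<in>bmats n k. bern_mat_prob \<rho> n k A * \<tau> ^ mat_weight n k A) = (1 - \<rho> + \<rho> * \<tau>) ^ (n * k)"
proof -
  have tw: "\<tau> ^ mat_weight n k A = (\<Prod>i<n. \<Prod>j<k. if A i j then \<tau> else 1)" for A
  proof -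
    have fin: "finite ({..<n} \<times> {..<k})" by simp
    have W: "mat_weight n k A = card {p \<in> {..<n} \<times> {..<k}. A (fst p) (snd p)}"
      unfolding mat_weight_def by (rule arg_cong[where f=card]) auto
    show ?thesis unfolding W
      by (subst prod.cartesian_product) (simp add: case_prod_beta pow_card_prod_set[OF fin])
  qed
  have "(\<Sum>A\<in>bmats n k. bern_mat_prob \<rho> n k A * \<tau> ^ mat_weight n k A)
     = (\<Sum>A\<in>bmats n k. \<Prod>i<n. \<Prod>j<k. (if A i j then \<rho> else 1 - \<rho>) * (if A i j then \<tau> else 1))"
    unfolding bern_prod tw rowp_def prod.distrib by simp
  also have "\<dots> = (\<Prod>i<n. \<Sum>v\<in>bvecs k. \<Prod>j<k. (if v j then \<rho> else 1 - \<rho>) * (if v j then \<tau> else 1))"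
    by (rule sum_bmats_prod)
  also have "\<dots> = (1 - \<rho> + \<rho> * \<tau>) ^ (n * k)"
  proof -
    have row: "(\<Sum>v\<in>bvecs k. \<Prod>j<k. (if v j then \<rho> else 1 - \<rho>) * (if v j then \<tau> else 1)) = (1 - \<rho> + \<rho> * \<tau>) ^ k"
      by (subst sum_bvecs_prod) (simp add: algebra_simps)
    show ?thesis unfolding row by (simp add: power_mult mult.commute)
  qed
  finally show ?thesis .
qed



lemma Y1:
  fixes e :: real
  assumes e: "0 < e" "e < 1" and z: "0 < \<zeta>"
  shows "(\<Sum>y\<in>bvecs n. bsc_lik e n k A x y * \<zeta> ^ hamming n (gf2_mult n k A x') y / \<zeta> ^ hamming n (gf2_mult n k A x) y)
    = (\<Prod>i<n. if gf2_mult n k A x i = gf2_mult n k A x' i then 1 else (1 - e) * \<zeta> + e / \<zeta>)"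
proof -
  define c where "c = gf2_mult n k A x"
  define c' where "c' = gf2_mult n k A x'"
  have "(\<Sum>y\<in>bvecs n. bsc_lik e n k A x y * \<zeta> ^ hamming n c' y / \<zeta> ^ hamming n c y)
     = (\<Sum>y\<in>bvecs n. \<Prod>i<n. (if c i \<noteq> y i then e else 1 - e) * (if c' i \<noteq> y i then \<zeta> else 1) / (if c i \<noteq> y i then \<zeta> else 1))"
    unfolding bsc_prod ham_prod c_def[symmetric] by (simp add: prod.distrib prod_dividef)
  also have "\<dots> = (\<Prod>i<n. if c i = c' i then 1 else (1 - e) * \<zeta> + e / \<zeta>)"
  proof -
    have zne: "\<zeta> \<noteq> 0" using z by simp
    show ?thesis by (subst sum_bvecs_prod) (rule prod.cong, auto simp: zne)
  qed
  finally show ?thesis unfolding c_def c'_def .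
qed

lemma Y2:
  fixes e s :: real
  shows "(\<Sum>y\<in>bvecs n. bsc_lik e n k A x y * s ^ hamming n (gf2_mult n k A x) y) = (1 - e + e * s) ^ n"
proof -
  define c where "c = gf2_mult n k A x"
  have "(\<Sum>y\<in>bvecs n. bsc_lik e n k A x y * s ^ hamming n c y)
     = (\<Sum>y\<in>bvecs n. \<Prod>i<n. (if c i \<noteq> y i then e else 1 - e) * (if c i \<noteq> y i then s else 1))"
    unfolding bsc_prod ham_prod c_def[symmetric] by (simp add: prod.distrib)
  also have "\<dots> = (\<Prod>i<n. 1 - e + e * s)"
    by (subst sum_bvecs_prod) (rule prod.cong, auto)
  finally show ?thesis unfolding c_def by simp
qed

lemma Y3:
  fixes e r :: real
  shows "(\<Sum>y\<in>bvecs n. bsc_lik e n k A x y * r ^ hamming n (gf2_mult n k A x') y)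
    = (\<Prod>i<n. if gf2_mult n k A x i = gf2_mult n k A x' i then 1 - e + e * r else (1 - e) * r + e)"
proof -
  define c where "c = gf2_mult n k A x"
  define c' where "c' = gf2_mult n k A x'"
  have "(\<Sum>y\<in>bvecs n. bsc_lik e n k A x y * r ^ hamming n c' y)
     = (\<Sum>y\<in>bvecs n. \<Prod>i<n. (if c i \<noteq> y i then e else 1 - e) * (if c' i \<noteq> y i then r else 1))"
    unfolding bsc_prod ham_prod c_def[symmetric] by (simp add: prod.distrib)
  also have "\<dots> = (\<Prod>i<n. if c i = c' i then 1 - e + e * r else (1 - e) * r + e)"
    by (subst sum_bvecs_prod) (rule prod.cong, auto)
  finally show ?thesis unfolding c_def c'_def .
qed

lemma pe_bound_A:
  fixes e s t dl :: real
  assumes e: "0 < e" "e < 1/2" and s: "1 < s" and dl: "0 \<le> dl"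
  defines "r \<equiv> e / (1 - e)"
  defines "Z \<equiv> (1 - e) * sqrt r + e / sqrt r"
  shows "prob_error e n k A \<le> (\<Sum>x\<in>bvecs k.
      (\<Sum>x'\<in>Sm k dl x. \<Prod>i<n. if gf2_mult n k A x i = gf2_mult n k A x' i then 1 else Z)
    + (1 - e + e * s) ^ n * s powr (- t)
    + r powr (- t) * (\<Sum>x'\<in>Lg k dl x. \<Prod>i<n. if gf2_mult n k A x i = gf2_mult n k A x' i then 1 - e + e * r else (1 - e) * r + e)) / 2 ^ k" (is "_ \<le> ?R")
proof -
  have e1: "e < 1" using e by simp
  have r0: "0 < r" unfolding r_def using e by simp
  define b where "b = (\<lambda>x' y. bsc_lik e n k A x' y)"
  define d where "d = (\<lambda>x' y. hamming n (gf2_mult n k A x') y)"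
  have "prob_error e n k A \<le> (\<Sum>x\<in>bvecs k. \<Sum>y\<in>bvecs n.
      ((\<Sum>x'\<in>Sm k dl x. b x y * sqrt r ^ d x' y / sqrt r ^ d x y)
        + b x y * s ^ d x y * s powr (- t)
        + r powr (- t) * (\<Sum>x'\<in>Lg k dl x. b x y * r ^ d x' y)) / 2 ^ k)"
    unfolding pe_eq b_def d_def r_def
    by (intro sum_mono point_bound[OF e s _ dl])
  also have "\<dots> = (\<Sum>x\<in>bvecs k.
      ((\<Sum>x'\<in>Sm k dl x. \<Sum>y\<in>bvecs n. b x y * sqrt r ^ d x' y / sqrt r ^ d x y)
        + (\<Sum>y\<in>bvecs n. b x y * s ^ d x y) * s powr (- t)
        + r powr (- t) * (\<Sum>x'\<in>Lg k dl x. \<Sum>y\<in>bvecs n. b x y * r ^ d x' y)) / 2 ^ k)"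
  proof (rule sum.cong[OF refl])
    fix x
    have 1: "(\<Sum>y\<in>bvecs n. \<Sum>x'\<in>Sm k dl x. b x y * sqrt r ^ d x' y / sqrt r ^ d x y)
      = (\<Sum>x'\<in>Sm k dl x. \<Sum>y\<in>bvecs n. b x y * sqrt r ^ d x' y / sqrt r ^ d x y)"
      by (rule sum.swap)
    have 2: "(\<Sum>y\<in>bvecs n. b x y * s ^ d x y * s powr (- t)) = (\<Sum>y\<in>bvecs n. b x y * s ^ d x y) * s powr (- t)"
      by (simp add: sum_distrib_right)
    have 3: "(\<Sum>y\<in>bvecs n. r powr (- t) * (\<Sum>x'\<in>Lg k dl x. b x y * r ^ d x' y))
      = r powr (- t) * (\<Sum>x'\<in>Lg k dl x. \<Sum>y\<in>bvecs n. b x y * r ^ d x' y)"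
    proof -
      have sw: "(\<Sum>y\<in>bvecs n. \<Sum>x'\<in>Lg k dl x. b x y * r ^ d x' y) = (\<Sum>x'\<in>Lg k dl x. \<Sum>y\<in>bvecs n. b x y * r ^ d x' y)"
        by (rule sum.swap)
      show ?thesis unfolding sw[symmetric] by (rule sum_distrib_left[symmetric])
    qed
    show "(\<Sum>y\<in>bvecs n.
      ((\<Sum>x'\<in>Sm k dl x. b x y * sqrt r ^ d x' y / sqrt r ^ d x y)
        + b x y * s ^ d x y * s powr (- t)
        + r powr (- t) * (\<Sum>x'\<in>Lg k dl x. b x y * r ^ d x' y)) / 2 ^ k) =
      ((\<Sum>x'\<in>Sm k dl x. \<Sum>y\<in>bvecs n. b x y * sqrt r ^ d x' y / sqrt r ^ d x y)
        + (\<Sum>y\<in>bvecs n. b x y * s ^ d x y) * s powr (- t)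
        + r powr (- t) * (\<Sum>x'\<in>Lg k dl x. \<Sum>y\<in>bvecs n. b x y * r ^ d x' y)) / 2 ^ k"
    proof -
      define F1 where "F1 = (\<lambda>y. \<Sum>x'\<in>Sm k dl x. b x y * sqrt r ^ d x' y / sqrt r ^ d x y)"
      define F2 where "F2 = (\<lambda>y. b x y * s ^ d x y * s powr (- t))"
      define F3 where "F3 = (\<lambda>y. r powr (- t) * (\<Sum>x'\<in>Lg k dl x. b x y * r ^ d x' y))"
      have "(\<Sum>y\<in>bvecs n. (F1 y + F2 y + F3 y) / 2 ^ k) = (sum F1 (bvecs n) + sum F2 (bvecs n) + sum F3 (bvecs n)) / 2 ^ k"
        by (simp add: sum.distrib flip: sum_divide_distrib)
      thus ?thesis unfolding F1_def F2_def F3_def 1 2 3 .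
    qed
  qed
  also have "\<dots> = ?R"
  proof -
    have sq: "0 < sqrt r" using r0 by simp
    show ?thesis unfolding b_def d_def Y1[OF e(1) e1 sq] Y2 Y3 Z_def by (simp add: sum_divide_distrib)
  qed
  finally show ?thesis .
qed



lemma sum_swap_mult:
  "(\<Sum>a\<in>Aset. w a * (\<Sum>x\<in>X. f a x)) = (\<Sum>x\<in>X. \<Sum>a\<in>Aset. w a * f a x :: real)"
  by (simp add: sum_distrib_left) (rule sum.swap)

lemma exp_bound:
  fixes e s t dl \<rho> :: real
  assumes e: "0 < e" "e < 1/2" and s: "1 < s" and dl: "0 \<le> dl" and \<rho>: "0 \<le> \<rho>" "\<rho> \<le> 1"
  defines "r \<equiv> e / (1 - e)"
  defines "Z \<equiv> (1 - e) * sqrt r + e / sqrt r"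
  defines "A0 \<equiv> 1 - e + e * r"
  defines "A1 \<equiv> (1 - e) * r + e"
  defines "\<theta> \<equiv> 1 - 2 * \<rho>"
  shows "(\<Sum>A\<in>bmats n k. bern_mat_prob \<rho> n k A * prob_error e n k A) \<le> (\<Sum>x\<in>bvecs k.
      (\<Sum>x'\<in>Sm k dl x. ((1 + Z) / 2 + (1 - Z) / 2 * \<theta> ^ hamming k x x') ^ n)
    + (1 - e + e * s) ^ n * s powr (- t)
    + r powr (- t) * (\<Sum>x'\<in>Lg k dl x. ((A0 + A1) / 2 + (A0 - A1) / 2 * \<theta> ^ hamming k x x') ^ n)) / 2 ^ k"
proof -
  define P1 where "P1 = (\<lambda>A x x'. \<Prod>i<n. if gf2_mult n k A x i = gf2_mult n k A x' i then 1 else Z)"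
  define P3 where "P3 = (\<lambda>A x x'. \<Prod>i<n. if gf2_mult n k A x i = gf2_mult n k A x' i then A0 else A1)"
  define K where "K = (1 - e + e * s) ^ n * s powr (- t)"
  define c where "c = r powr (- t)"
  define H where "H = (\<lambda>A x. (\<Sum>x'\<in>Sm k dl x. P1 A x x') + K + c * (\<Sum>x'\<in>Lg k dl x. P3 A x x'))"
  have "(\<Sum>A\<in>bmats n k. bern_mat_prob \<rho> n k A * prob_error e n k A)
     \<le> (\<Sum>A\<in>bmats n k. bern_mat_prob \<rho> n k A * ((\<Sum>x\<in>bvecs k. H A x) / 2 ^ k))"
  proof (rule sum_mono, rule mult_left_mono)
    fix A show "prob_error e n k A \<le> (\<Sum>x\<in>bvecs k. H A x) / 2 ^ k"
      using pe_bound_A[OF e s dl, where n=n and k=k and A=A and t=t] unfolding H_def P1_def P3_def K_def c_def Z_def r_def A0_def A1_def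
      by (simp add: sum_divide_distrib)
    show "0 \<le> bern_mat_prob \<rho> n k A" by (rule bern_nonneg[OF \<rho>])
  qed
  also have "\<dots> = (\<Sum>x\<in>bvecs k. \<Sum>A\<in>bmats n k. bern_mat_prob \<rho> n k A * H A x) / 2 ^ k"
  proof -
    have "(\<Sum>A\<in>bmats n k. bern_mat_prob \<rho> n k A * ((\<Sum>x\<in>bvecs k. H A x) / 2 ^ k))
      = (\<Sum>A\<in>bmats n k. bern_mat_prob \<rho> n k A * (\<Sum>x\<in>bvecs k. H A x)) / 2 ^ k"
      unfolding sum_divide_distrib[of _ "bmats n k"] by (intro sum.cong refl) simp
    thus ?thesis unfolding sum_swap_mult .
  qed
  also have "\<dots> = (\<Sum>x\<in>bvecs k.
      (\<Sum>x'\<in>Sm k dl x. ((1 + Z) / 2 + (1 - Z) / 2 * \<theta> ^ hamming k x x') ^ n)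
    + (1 - e + e * s) ^ n * s powr (- t)
    + r powr (- t) * (\<Sum>x'\<in>Lg k dl x. ((A0 + A1) / 2 + (A0 - A1) / 2 * \<theta> ^ hamming k x x') ^ n)) / 2 ^ k"
  proof -
    have "(\<Sum>A\<in>bmats n k. bern_mat_prob \<rho> n k A * H A x) =
      (\<Sum>x'\<in>Sm k dl x. ((1 + Z) / 2 + (1 - Z) / 2 * \<theta> ^ hamming k x x') ^ n)
    + (1 - e + e * s) ^ n * s powr (- t)
    + r powr (- t) * (\<Sum>x'\<in>Lg k dl x. ((A0 + A1) / 2 + (A0 - A1) / 2 * \<theta> ^ hamming k x x') ^ n)" for x
    proof -
      have "(\<Sum>A\<in>bmats n k. bern_mat_prob \<rho> n k A * H A x)
        = (\<Sum>A\<in>bmats n k. bern_mat_prob \<rho> n k A * (\<Sum>x'\<in>Sm k dl x. P1 A x x'))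
          + K * (\<Sum>A\<in>bmats n k. bern_mat_prob \<rho> n k A)
          + c * (\<Sum>A\<in>bmats n k. bern_mat_prob \<rho> n k A * (\<Sum>x'\<in>Lg k dl x. P3 A x x'))"
        unfolding H_def by (simp add: distrib_left sum.distrib sum_distrib_left mult_ac)
      also have "\<dots> = (\<Sum>x'\<in>Sm k dl x. \<Sum>A\<in>bmats n k. bern_mat_prob \<rho> n k A * P1 A x x')
          + K + c * (\<Sum>x'\<in>Lg k dl x. \<Sum>A\<in>bmats n k. bern_mat_prob \<rho> n k A * P3 A x x')"
        unfolding sum_swap_mult bern_sum_one by simp
      also have "\<dots> = (\<Sum>x'\<in>Sm k dl x. ((1 + Z) / 2 + (1 - Z) / 2 * \<theta> ^ hamming k x x') ^ n)
    + (1 - e + e * s) ^ n * s powr (- t)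
    + r powr (- t) * (\<Sum>x'\<in>Lg k dl x. ((A0 + A1) / 2 + (A0 - A1) / 2 * \<theta> ^ hamming k x x') ^ n)"
        unfolding P1_def P3_def mat_expect K_def c_def \<theta>_def ..
      finally show ?thesis .
    qed
    thus ?thesis by simp
  qed
  finally show ?thesis .
qed



lemma sum_ham_pow: "(\<Sum>x'\<in>bvecs k. lam ^ hamming k x x') = (1 + lam::real) ^ k"
proof -
  have "(\<Sum>x'\<in>bvecs k. lam ^ hamming k x x') = (\<Sum>x'\<in>bvecs k. \<Prod>i<k. if x i \<noteq> x' i then lam else 1)"
    by (simp add: ham_prod)
  also have "\<dots> = (\<Prod>i<k. 1 + lam)" by (subst sum_bvecs_prod) (rule prod.cong, auto)
  finally show ?thesis by simp
qed

lemma card_Sm: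
  fixes lam dl :: real
  assumes "0 < lam" "lam \<le> 1"
  shows "real (card (Sm k dl x)) \<le> (1 + lam) ^ k * lam powr (- (dl * k))"
proof -
  have "real (card (Sm k dl x)) = (\<Sum>x'\<in>Sm k dl x. 1)" by simp
  also have "\<dots> \<le> (\<Sum>x'\<in>Sm k dl x. lam ^ hamming k x x' * lam powr (- (dl * k)))"
  proof (rule sum_mono)
    fix x' assume "x' \<in> Sm k dl x"
    hence h: "real (hamming k x x') \<le> dl * k" unfolding Sm_def by auto
    have "lam powr (dl * k) \<le> lam powr (real (hamming k x x'))"
      by (rule powr_mono'[OF h]) (use assms in auto)
    also have "lam powr (real (hamming k x x')) = lam ^ hamming k x x'" using assms by (simp add: powr_realpow)
    finally have "lam powr (dl * k) \<le> lam ^ hamming k x x'" .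
    hence "lam powr (dl * k) * lam powr (- (dl * k)) \<le> lam ^ hamming k x x' * lam powr (- (dl * k))"
      by (rule mult_right_mono) simp
    moreover have "lam powr (dl * k) * lam powr (- (dl * k)) = 1" using assms by (simp flip: powr_add)
    ultimately show "1 \<le> lam ^ hamming k x x' * lam powr (- (dl * k))" by simp
  qed
  also have "\<dots> \<le> (\<Sum>x'\<in>bvecs k. lam ^ hamming k x x' * lam powr (- (dl * k)))"
    by (rule sum_mono2[OF finite_bvecs]) (use assms in \<open>auto simp: Sm_def\<close>)
  also have "\<dots> = (1 + lam) ^ k * lam powr (- (dl * k))"
    by (simp add: sum_distrib_right[symmetric] sum_ham_pow)
  finally show ?thesis .
qed

lemma card_Lg: "real (card (Lg k dl x)) \<le> 2 ^ k"
proof -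
  have "card (Lg k dl x) \<le> card (bvecs k)"
    by (rule card_mono[OF finite_bvecs]) (auto simp: Lg_def)
  thus ?thesis by (simp add: card_bvecs)
qed

lemma ham_pos: "x \<in> bvecs k \<Longrightarrow> x' \<in> bvecs k \<Longrightarrow> x' \<noteq> x \<Longrightarrow> 1 \<le> hamming k x x'"
proof (rule ccontr)
  assume x: "x \<in> bvecs k" "x' \<in> bvecs k" "x' \<noteq> x" and "\<not> 1 \<le> hamming k x x'"
  hence "hamming k x x' = 0" by simp
  hence "{i. i < k \<and> x i \<noteq> x' i} = {}" unfolding hamming_def by simp
  hence "x i = x' i" for i using x(1,2) unfolding bvecs_def by (cases "i < k") auto
  thus False using x(3) by auto
qed

lemma lin2: "- x \<le> b \<Longrightarrow> b \<le> a \<Longrightarrow> 0 \<le> a + (x::real)" by linarith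

lemma G1_bound:
  fixes Z \<theta> :: real
  assumes "0 \<le> Z" "Z \<le> 1" "\<bar>\<theta>\<bar> \<le> 1" "1 \<le> w"
  shows "0 \<le> (1 + Z) / 2 + (1 - Z) / 2 * \<theta> ^ w" "(1 + Z) / 2 + (1 - Z) / 2 * \<theta> ^ w \<le> (1 + Z) / 2 + (1 - Z) / 2 * \<bar>\<theta>\<bar>"
proof -
  have a: "\<bar>\<theta> ^ w\<bar> \<le> 1" using assms by (simp add: power_abs power_le_one)
  have "\<bar>\<theta>\<bar> ^ w \<le> \<bar>\<theta>\<bar> ^ 1" using assms by (intro power_decreasing) auto
  hence b: "\<theta> ^ w \<le> \<bar>\<theta>\<bar>" by (metis abs_ge_self order_trans power_abs power_one_right)
  have "- 1 \<le> \<theta> ^ w" using a by simp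
  hence h: "(1 - Z) / 2 * (- 1) \<le> (1 - Z) / 2 * \<theta> ^ w" using assms by (intro mult_left_mono) auto
  hence h2: "- ((1 - Z) / 2) \<le> (1 - Z) / 2 * \<theta> ^ w" by simp
  have h3: "- ((1 - Z) / 2 * \<theta> ^ w) \<le> (1 - Z) / 2" using h2 by linarith
  show "0 \<le> (1 + Z) / 2 + (1 - Z) / 2 * \<theta> ^ w" by (rule lin2[OF h3]) (use assms in simp)
  show "(1 + Z) / 2 + (1 - Z) / 2 * \<theta> ^ w \<le> (1 + Z) / 2 + (1 - Z) / 2 * \<bar>\<theta>\<bar>"
    using b assms by (simp add: mult_left_mono)
qed

lemma G3_bound:
  fixes P Q \<theta> a :: real
  assumes "0 \<le> P" "0 \<le> Q" "\<bar>\<theta>\<bar> \<le> 1" "0 \<le> a" "a < real w"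
  shows "0 \<le> (P + Q) / 2 + (P - Q) / 2 * \<theta> ^ w"
        "(P + Q) / 2 + (P - Q) / 2 * \<theta> ^ w \<le> (P + Q) / 2 + \<bar>P - Q\<bar> / 2 * \<bar>\<theta>\<bar> powr a"
proof -
  have a1: "\<bar>\<theta> ^ w\<bar> \<le> 1" using assms by (simp add: power_abs power_le_one)
  have "\<bar>(P - Q) / 2 * \<theta> ^ w\<bar> \<le> \<bar>P - Q\<bar> / 2 * 1"
    using a1 by (simp add: abs_mult mult_left_le)
  moreover have "\<bar>P - Q\<bar> \<le> P + Q" using assms by arith
  ultimately show "0 \<le> (P + Q) / 2 + (P - Q) / 2 * \<theta> ^ w"
    by (intro lin2[where b="\<bar>P - Q\<bar> / 2"]) (auto dest: abs_le_D2)
  have w1: "1 \<le> w" using assms by linarith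
  have t: "\<bar>\<theta>\<bar> ^ w \<le> \<bar>\<theta>\<bar> powr a"
  proof (cases "\<theta> = 0")
    case True thus ?thesis using w1 by (simp add: power_0_left)
  next
    case False
    have "\<bar>\<theta>\<bar> powr (real w) \<le> \<bar>\<theta>\<bar> powr a" by (rule powr_mono') (use assms in auto)
    thus ?thesis using False by (simp add: powr_realpow)
  qed
  have "(P - Q) / 2 * \<theta> ^ w \<le> \<bar>(P - Q) / 2 * \<theta> ^ w\<bar>" by simp
  also have "\<dots> = \<bar>P - Q\<bar> / 2 * \<bar>\<theta>\<bar> ^ w" by (simp add: abs_mult power_abs)
  also have "\<dots> \<le> \<bar>P - Q\<bar> / 2 * \<bar>\<theta>\<bar> powr a" using t by (simp add: mult_left_mono)
  finally show "(P + Q) / 2 + (P - Q) / 2 * \<theta> ^ w \<le> (P + Q) / 2 + \<bar>P - Q\<bar> / 2 * \<bar>\<theta>\<bar> powr a" by simp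
qed



lemma Z_facts:
  fixes e :: real
  assumes e: "0 < e" "e < 1/2"
  defines "Z \<equiv> (1 - e) * sqrt (e / (1 - e)) + e / sqrt (e / (1 - e))"
  shows "0 \<le> Z" "Z < 1"
proof -
  define a where "a = sqrt e"
  define b where "b = sqrt (1 - e)"
  have a0: "0 < a" and b0: "0 < b" unfolding a_def b_def using e by auto
  have ea: "e = a^2" and eb: "1 - e = b^2" unfolding a_def b_def using e by auto
  have sr: "sqrt (e / (1 - e)) = a / b" unfolding a_def b_def by (simp add: real_sqrt_divide)
  have z1: "(1 - e) * (a / b) = a * b" unfolding eb using b0 by (simp add: power2_eq_square)
  have z2: "e / (a / b) = a * b" unfolding ea using a0 b0 by (simp add: power2_eq_square)
  have Z: "Z = 2 * a * b" unfolding Z_def sr z1 z2 by simp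
  show "0 \<le> Z" unfolding Z using a0 b0 by simp
  have ab: "a \<noteq> b" proof
    assume "a = b" hence "e = 1 - e" using ea eb by simp
    thus False using e by simp
  qed
  have "0 < (a - b)^2" using ab by simp
  moreover have "a^2 + b^2 = 1" using ea eb by simp
  ultimately show "Z < 1" unfolding Z by (simp add: power2_diff) 
qed

lemma exp_bound2:
  fixes e s t dl \<rho> lam :: real
  assumes e: "0 < e" "e < 1/2" and s: "1 < s" and dl: "0 \<le> dl" and \<rho>: "0 \<le> \<rho>" "\<rho> \<le> 1"
    and lam: "0 < lam" "lam \<le> 1"
  defines "r \<equiv> e / (1 - e)"
  defines "Z \<equiv> (1 - e) * sqrt r + e / sqrt r"
  defines "A0 \<equiv> 1 - e + e * r"
  defines "A1 \<equiv> (1 - e) * r + e"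
  defines "\<theta> \<equiv> 1 - 2 * \<rho>"
  shows "(\<Sum>A\<in>bmats n k. bern_mat_prob \<rho> n k A * prob_error e n k A)
    \<le> (1 + lam) ^ k * lam powr (- (dl * k)) * ((1 + Z) / 2 + (1 - Z) / 2 * \<bar>\<theta>\<bar>) ^ n
      + (1 - e + e * s) ^ n * s powr (- t)
      + r powr (- t) * 2 ^ k * ((A0 + A1) / 2 + \<bar>A0 - A1\<bar> / 2 * \<bar>\<theta>\<bar> powr (dl * k)) ^ n"
proof -
  have Z0: "0 \<le> Z" and Z1: "Z < 1" using Z_facts[OF e] unfolding Z_def r_def by auto
  have r0: "0 < r" unfolding r_def using e by simp
  have A00: "0 \<le> A0" unfolding A0_def using e r0 by simp
  have A10: "0 \<le> A1" unfolding A1_def using e r0 by simp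
  have th: "\<bar>\<theta>\<bar> \<le> 1" unfolding \<theta>_def using \<rho> by simp
  define \<beta> where "\<beta> = (1 + Z) / 2 + (1 - Z) / 2 * \<bar>\<theta>\<bar>"
  define Gm where "Gm = (A0 + A1) / 2 + \<bar>A0 - A1\<bar> / 2 * \<bar>\<theta>\<bar> powr (dl * k)"
  define Cnt where "Cnt = (1 + lam) ^ k * lam powr (- (dl * k))"
  define K where "K = (1 - e + e * s) ^ n * s powr (- t)"
  have dk: "0 \<le> dl * k" using dl by simp
  have Gm0: "0 \<le> Gm" unfolding Gm_def using A00 A10 by simp
  have c0: "0 \<le> r powr (- t)" by simp
  have step: "(\<Sum>x'\<in>Sm k dl x. ((1 + Z) / 2 + (1 - Z) / 2 * \<theta> ^ hamming k x x') ^ n)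
    + K + r powr (- t) * (\<Sum>x'\<in>Lg k dl x. ((A0 + A1) / 2 + (A0 - A1) / 2 * \<theta> ^ hamming k x x') ^ n)
    \<le> Cnt * \<beta> ^ n + K + r powr (- t) * 2 ^ k * Gm ^ n" if x: "x \<in> bvecs k" for x
  proof -
    have "(\<Sum>x'\<in>Sm k dl x. ((1 + Z) / 2 + (1 - Z) / 2 * \<theta> ^ hamming k x x') ^ n)
        \<le> (\<Sum>x'\<in>Sm k dl x. \<beta> ^ n)"
    proof (rule sum_mono)
      fix x' assume "x' \<in> Sm k dl x"
      hence w: "1 \<le> hamming k x x'" using ham_pos[OF x] unfolding Sm_def by auto
      show "((1 + Z) / 2 + (1 - Z) / 2 * \<theta> ^ hamming k x x') ^ n \<le> \<beta> ^ n"
        unfolding \<beta>_def by (rule power_mono[OF G1_bound(2) G1_bound(1)]) (use Z0 Z1 th w in auto)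
    qed
    also have "\<dots> = real (card (Sm k dl x)) * \<beta> ^ n" by simp
    also have "\<dots> \<le> Cnt * \<beta> ^ n" unfolding Cnt_def
      by (rule mult_right_mono[OF card_Sm[OF lam]]) (use Z0 Z1 th in \<open>simp add: \<beta>_def\<close>)
    finally have 1: "(\<Sum>x'\<in>Sm k dl x. ((1 + Z) / 2 + (1 - Z) / 2 * \<theta> ^ hamming k x x') ^ n) \<le> Cnt * \<beta> ^ n" .
    have "(\<Sum>x'\<in>Lg k dl x. ((A0 + A1) / 2 + (A0 - A1) / 2 * \<theta> ^ hamming k x x') ^ n)
        \<le> (\<Sum>x'\<in>Lg k dl x. Gm ^ n)"
    proof (rule sum_mono)
      fix x' assume "x' \<in> Lg k dl x"
      hence w: "dl * k < real (hamming k x x')" unfolding Lg_def by auto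
      show "((A0 + A1) / 2 + (A0 - A1) / 2 * \<theta> ^ hamming k x x') ^ n \<le> Gm ^ n"
        unfolding Gm_def by (rule power_mono[OF G3_bound(2) G3_bound(1)]) (use A00 A10 th dk w in auto)
    qed
    also have "\<dots> = real (card (Lg k dl x)) * Gm ^ n" by simp
    also have "\<dots> \<le> 2 ^ k * Gm ^ n" by (rule mult_right_mono[OF card_Lg]) (use Gm0 in simp)
    finally have 2: "(\<Sum>x'\<in>Lg k dl x. ((A0 + A1) / 2 + (A0 - A1) / 2 * \<theta> ^ hamming k x x') ^ n) \<le> 2 ^ k * Gm ^ n" .
    have "r powr (- t) * (\<Sum>x'\<in>Lg k dl x. ((A0 + A1) / 2 + (A0 - A1) / 2 * \<theta> ^ hamming k x x') ^ n)
       \<le> r powr (- t) * (2 ^ k * Gm ^ n)" by (rule mult_left_mono[OF 2 c0])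
    thus ?thesis using 1 by (simp add: mult.assoc)
  qed
  have "(\<Sum>A\<in>bmats n k. bern_mat_prob \<rho> n k A * prob_error e n k A)
     \<le> (\<Sum>x\<in>bvecs k.
      (\<Sum>x'\<in>Sm k dl x. ((1 + Z) / 2 + (1 - Z) / 2 * \<theta> ^ hamming k x x') ^ n)
    + K + r powr (- t) * (\<Sum>x'\<in>Lg k dl x. ((A0 + A1) / 2 + (A0 - A1) / 2 * \<theta> ^ hamming k x x') ^ n)) / 2 ^ k"
    using exp_bound[OF e s dl \<rho>, where n=n and k=k and t=t] unfolding K_def Z_def r_def A0_def A1_def \<theta>_def .
  also have "\<dots> \<le> (\<Sum>x\<in>bvecs k. Cnt * \<beta> ^ n + K + r powr (- t) * 2 ^ k * Gm ^ n) / 2 ^ k"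
    by (intro divide_right_mono sum_mono step) auto
  also have "\<dots> = Cnt * \<beta> ^ n + K + r powr (- t) * 2 ^ k * Gm ^ n" by (simp add: card_bvecs)
  finally show ?thesis unfolding Cnt_def \<beta>_def K_def Gm_def .
qed



lemma ln_lower: "0 < (s::real) \<Longrightarrow> - ln s \<le> (1 - s) / s"
proof -
  assume s: "0 < s"
  have "ln (1 / s) \<le> 1 / s - 1" using ln_le_minus_one[of "1/s"] s by simp
  thus ?thesis using s by (simp add: ln_div diff_divide_distrib)
qed

lemma chernoff_up:
  fixes p a :: real
  assumes "0 < p" "p < a"
  defines "s \<equiv> 1 + (a - p) / (2 * p)"
  shows "1 < s" "(1 - p + p * s) * s powr (- a) < 1"
proof -
  show s1: "1 < s" unfolding s_def using assms by simp
  have pos: "0 < 1 - p + p * s" using s1 assms(1) by (smt (verit) mult_less_cancel_left2)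
  have l1: "ln (1 - p + p * s) \<le> p * (s - 1)" using ln_le_minus_one[OF pos] by (simp add: algebra_simps)
  have l2: "- ln s \<le> (1 - s) / s" by (rule ln_lower) (use s1 in simp)
  have "ln ((1 - p + p * s) * s powr (- a)) = ln (1 - p + p * s) - a * ln s"
    using pos s1 by (simp add: ln_mult)
  also have "\<dots> \<le> p * (s - 1) + a * ((1 - s) / s)"
  proof -
    have l3: "a * (- ln s) \<le> a * ((1 - s) / s)" by (rule mult_left_mono[OF l2]) (use assms(1,2) in simp)
    hence "- (a * ln s) \<le> a * ((1 - s) / s)" by simp
    thus ?thesis using l1 by linarith
  qed
  also have "\<dots> = (s - 1) * (p * s - a) / s" using s1 by (simp add: field_simps)
  also have "\<dots> < 0"
  proof -
    have "p * s - a = - (a - p) / 2" unfolding s_def using assms by (simp add: field_simps)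
    hence "p * s - a < 0" using assms by simp
    thus ?thesis using s1 by (simp add: divide_neg_pos mult_pos_neg)
  qed
  finally show "(1 - p + p * s) * s powr (- a) < 1" using pos s1 by simp
qed

lemma chernoff_down:
  fixes p a :: real
  assumes "0 < a" "a < p" "p < 1"
  defines "s \<equiv> 1 - (p - a) / (2 * p)"
  shows "0 < s" "s < 1" "(1 - p + p * s) * s powr (- a) < 1"
proof -
  have p0: "0 < p" using assms by simp
  have "(p - a) / (2 * p) < 1" using assms p0 by (simp add: divide_less_eq)
  thus s0: "0 < s" unfolding s_def by simp
  show s1: "s < 1" unfolding s_def using assms p0 by simp
  have ps: "p * s = (p + a) / 2" unfolding s_def using p0 by (simp add: field_simps)
  have pos: "0 < 1 - p + p * s" unfolding ps using assms(1,3) by (simp add: field_simps)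
  have l1: "ln (1 - p + p * s) \<le> p * (s - 1)" using ln_le_minus_one[OF pos] by (simp add: algebra_simps)
  have l2: "- ln s \<le> (1 - s) / s" by (rule ln_lower[OF s0])
  have "ln ((1 - p + p * s) * s powr (- a)) = ln (1 - p + p * s) - a * ln s"
    using pos s0 by (simp add: ln_mult)
  also have "\<dots> \<le> p * (s - 1) + a * ((1 - s) / s)"
  proof -
    have l3: "a * (- ln s) \<le> a * ((1 - s) / s)" by (rule mult_left_mono[OF l2]) (use assms(1) in simp)
    hence "- (a * ln s) \<le> a * ((1 - s) / s)" by simp
    thus ?thesis using l1 by linarith
  qed
  also have "\<dots> = (1 - s) * (a - p * s) / s" using s0 by (simp add: field_simps)
  also have "\<dots> < 0"
  proof -
    have "a - p * s < 0" unfolding ps using assms by simp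
    moreover have "0 < 1 - s" using s1 by simp
    ultimately show ?thesis using s0 by (simp add: divide_neg_pos mult_pos_neg)
  qed
  finally show "(1 - p + p * s) * s powr (- a) < 1" using pos s0 by simp
qed



lemma mgf_pow:
  fixes \<tau> a X :: real
  assumes "0 < \<tau>"
  shows "X ^ N * \<tau> powr (- (a * N)) = (X * \<tau> powr (- a)) ^ N"
  using assms by (simp add: power_mult_distrib powr_power mult.commute)

lemma typ_mass:
  fixes \<rho> \<eta> a2 \<tau>1 \<tau>2 :: real
  assumes \<rho>: "0 < \<rho>" "\<rho> < 1" and a2: "\<rho> - \<eta> \<le> a2"
    and \<tau>1: "1 \<le> \<tau>1" and \<tau>2: "0 < \<tau>2" "\<tau>2 \<le> 1" and N: "0 < n * k"
  shows "1 - ((1 - \<rho> + \<rho> * \<tau>1) * \<tau>1 powr (- (\<rho> + \<eta>))) ^ (n * k)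
           - ((1 - \<rho> + \<rho> * \<tau>2) * \<tau>2 powr (- a2)) ^ (n * k)
         \<le> (\<Sum>A\<in>typical_mats \<rho> \<eta> n k. bern_mat_prob \<rho> n k A)"
proof -
  define a1 where "a1 = \<rho> + \<eta>"
  define N where "N = n * k"
  define W where "W = (\<lambda>A. mat_weight n k A)"
  define f where "f = (\<lambda>A. \<tau>1 ^ W A * \<tau>1 powr (- (a1 * N)) + \<tau>2 ^ W A * \<tau>2 powr (- (a2 * N)))"
  define T where "T = typical_mats \<rho> \<eta> n k"
  have TB: "T \<subseteq> bmats n k" unfolding T_def typical_mats_def by auto
  have fin: "finite (bmats n k)" by (rule finite_bmats)
  have bn: "\<And>A. 0 \<le> bern_mat_prob \<rho> n k A" using \<rho> by (intro bern_nonneg) auto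
  have f0: "\<And>A. 0 \<le> f A" unfolding f_def using \<tau>1 \<tau>2 by simp
  have Nr: "0 < real N" unfolding N_def using N by simp
  have f1: "1 \<le> f A" if A: "A \<in> bmats n k - T" for A
  proof -
    have "\<not> \<bar>real (W A) / real N - \<rho>\<bar> < \<eta>" using A unfolding T_def typical_mats_def W_def N_def by auto
    hence "real (W A) / real N \<ge> a1 \<or> real (W A) / real N \<le> \<rho> - \<eta>" unfolding a1_def by linarith
    hence "real (W A) \<ge> a1 * N \<or> real (W A) \<le> a2 * N" using Nr a2
      by (auto simp: divide_le_eq le_divide_eq intro: order_trans mult_right_mono)
    thus ?thesis
    proof
      assume h: "real (W A) \<ge> a1 * N"
      have "\<tau>1 powr (a1 * N) \<le> \<tau>1 powr (real (W A))" by (rule powr_mono[OF h \<tau>1])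
      hence "\<tau>1 powr (a1 * N) * \<tau>1 powr (- (a1 * N)) \<le> \<tau>1 ^ W A * \<tau>1 powr (- (a1 * N))"
        using \<tau>1 by (intro mult_right_mono) (auto simp: powr_realpow)
      moreover have "\<tau>1 powr (a1 * N) * \<tau>1 powr (- (a1 * N)) = 1" using \<tau>1 by (simp flip: powr_add)
      moreover have "0 \<le> \<tau>2 ^ W A * \<tau>2 powr (- (a2 * N))" using \<tau>2 by simp
      ultimately show ?thesis unfolding f_def by linarith
    next
      assume h: "real (W A) \<le> a2 * N"
      have "\<tau>2 powr (a2 * N) \<le> \<tau>2 powr (real (W A))" by (rule powr_mono'[OF h]) (use \<tau>2 in auto)
      hence "\<tau>2 powr (a2 * N) * \<tau>2 powr (- (a2 * N)) \<le> \<tau>2 ^ W A * \<tau>2 powr (- (a2 * N))"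
        using \<tau>2 by (intro mult_right_mono) (auto simp: powr_realpow)
      moreover have "\<tau>2 powr (a2 * N) * \<tau>2 powr (- (a2 * N)) = 1" using \<tau>2 by (simp flip: powr_add)
      moreover have "0 \<le> \<tau>1 ^ W A * \<tau>1 powr (- (a1 * N))" using \<tau>1 by simp
      ultimately show ?thesis unfolding f_def by linarith
    qed
  qed
  have split: "(\<Sum>A\<in>bmats n k. bern_mat_prob \<rho> n k A) = (\<Sum>A\<in>T. bern_mat_prob \<rho> n k A) + (\<Sum>A\<in>bmats n k - T. bern_mat_prob \<rho> n k A)"
    using sum.subset_diff[OF TB fin] by (simp add: add.commute)
  have "(\<Sum>A\<in>bmats n k - T. bern_mat_prob \<rho> n k A) \<le> (\<Sum>A\<in>bmats n k - T. bern_mat_prob \<rho> n k A * f A)"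
  proof (rule sum_mono)
    fix A assume "A \<in> bmats n k - T"
    hence "bern_mat_prob \<rho> n k A * 1 \<le> bern_mat_prob \<rho> n k A * f A"
      using f1 bn by (intro mult_left_mono) auto
    thus "bern_mat_prob \<rho> n k A \<le> bern_mat_prob \<rho> n k A * f A" by simp
  qed
  also have "\<dots> \<le> (\<Sum>A\<in>bmats n k. bern_mat_prob \<rho> n k A * f A)"
    by (rule sum_mono2[OF fin]) (use bn f0 in auto)
  also have "\<dots> = (1 - \<rho> + \<rho> * \<tau>1) ^ N * \<tau>1 powr (- (a1 * N)) + (1 - \<rho> + \<rho> * \<tau>2) ^ N * \<tau>2 powr (- (a2 * N))"
    unfolding f_def W_def N_def
    by (simp add: distrib_left sum.distrib mult.assoc[symmetric] sum_distrib_right[symmetric] bern_weight_mgf)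
  also have "\<dots> = ((1 - \<rho> + \<rho> * \<tau>1) * \<tau>1 powr (- a1)) ^ N + ((1 - \<rho> + \<rho> * \<tau>2) * \<tau>2 powr (- a2)) ^ N"
    using \<tau>1 \<tau>2 by (simp add: mgf_pow)
  finally show ?thesis using split bern_sum_one[of \<rho> n k] unfolding a1_def N_def T_def by linarith
qed



lemma pow_base_tendsto:
  fixes f :: "nat \<Rightarrow> real"
  assumes "f \<longlonglongrightarrow> L" "L < 1" "\<And>n. 0 \<le> f n"
  shows "(\<lambda>n. f n ^ n) \<longlonglongrightarrow> 0"
proof -
  define c where "c = (L + 1) / 2"
  have Lc: "L < c" "c < 1" unfolding c_def using assms(2) by auto
  have ev: "eventually (\<lambda>n. f n < c) sequentially" by (rule order_tendstoD(2)[OF assms(1) Lc(1)])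
  have L0: "0 \<le> L" by (rule LIMSEQ_le_const[OF assms(1)]) (use assms(3) in auto)
  have c0: "0 \<le> c" unfolding c_def using L0 by simp
  have h0: "(\<lambda>n. c ^ n) \<longlonglongrightarrow> 0" by (rule LIMSEQ_power_zero) (use c0 Lc in simp)
  have h1: "eventually (\<lambda>n. f n ^ n \<le> c ^ n) sequentially"
    using ev by eventually_elim (intro power_mono, use assms(3) in auto)
  have h2: "eventually (\<lambda>n. 0 \<le> f n ^ n) sequentially" using assms(3) by simp
  show ?thesis by (rule tendsto_sandwich[OF h2 h1 tendsto_const h0])
qed

lemma kk_facts:
  fixes R :: real
  assumes "0 < R"
  shows "\<And>n. real (nat \<lfloor>R * real n\<rfloor>) \<le> R * real n"
    "filterlim (\<lambda>n. nat \<lfloor>R * real n\<rfloor>) at_top sequentially"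
proof -
  fix n :: nat
  have "0 \<le> R * real n" using assms by simp
  thus "real (nat \<lfloor>R * real n\<rfloor>) \<le> R * real n" by linarith
next
  have "filterlim (\<lambda>n. R * real n) at_top sequentially"
    using assms by (intro filterlim_tendsto_pos_mult_at_top[OF tendsto_const] filterlim_real_sequentially) auto
  hence "filterlim (\<lambda>n. floor (R * real n)) at_top sequentially"
    by (rule filterlim_compose[OF filterlim_floor_sequentially])
  thus "filterlim (\<lambda>n. nat \<lfloor>R * real n\<rfloor>) at_top sequentially"
    by (rule filterlim_compose[OF filterlim_nat_sequentially])
qed



lemma cap_rate:
  fixes e R :: real
  assumes e: "0 < e" "e < 1/2" and R: "0 < R" "R < 1 - bin_entropy e"
  defines "r \<equiv> e / (1 - e)"
  defines "\<delta> \<equiv> (1 - bin_entropy e - R) * ln 2 / (2 * (- ln r))"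
  defines "A0 \<equiv> 1 - e + e * r"
  defines "A1 \<equiv> (1 - e) * r + e"
  shows "0 < \<delta>" "r powr (- (e + \<delta>)) * 2 powr R * ((A0 + A1) / 2) < 1"
proof -
  have r0: "0 < r" and r1: "r < 1" unfolding r_def using e by (auto simp: divide_less_eq)
  have lr: "ln r < 0" using r0 r1 by simp
  define C0 where "C0 = 1 - bin_entropy e - R"
  have C0: "0 < C0" unfolding C0_def using R by simp
  show d0: "0 < \<delta>" unfolding \<delta>_def C0_def[symmetric] using C0 lr by (intro divide_pos_pos mult_pos_pos) auto
  have M: "(A0 + A1) / 2 = 1 / (2 * (1 - e))" unfolding A0_def A1_def r_def using e by (simp add: field_simps)
  have h: "bin_entropy e * ln 2 = - e * ln e - (1 - e) * ln (1 - e)"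
    unfolding bin_entropy_def log_def by (simp add: field_simps)
  have lnr: "ln r = ln e - ln (1 - e)" unfolding r_def using e by (simp add: ln_div)
  have pos: "0 < r powr (- (e + \<delta>)) * 2 powr R * ((A0 + A1) / 2)" unfolding M using r0 e by simp
  have "ln (r powr (- (e + \<delta>)) * 2 powr R * ((A0 + A1) / 2))
      = - (e + \<delta>) * ln r + R * ln 2 - ln 2 - ln (1 - e)"
  proof -
    have l2: "ln (2 - 2 * e) = ln 2 + ln (1 - e)" using ln_mult[of 2 "1-e"] e by (simp add: algebra_simps)
    show ?thesis unfolding M using r0 e l2 by (simp add: ln_mult ln_div)
  qed
  also have "\<dots> = bin_entropy e * ln 2 - \<delta> * ln r + R * ln 2 - ln 2"
    unfolding h lnr by (simp add: algebra_simps)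
  also have "\<dots> = - C0 * ln 2 / 2"
    unfolding \<delta>_def C0_def[symmetric] using lr by (simp add: C0_def field_simps)
  also have "\<dots> < 0" using C0 by simp
  finally show "r powr (- (e + \<delta>)) * 2 powr R * ((A0 + A1) / 2) < 1" using pos by simp
qed



lemma lin3: "x < c \<Longrightarrow> a + c \<le> 1 \<Longrightarrow> a + x < (1::real)" by linarith

theorem proposition1:
  fixes \<epsilon> R \<rho> \<eta> :: real
  assumes "0 < \<epsilon>" "\<epsilon> < 1 / 2"
    and "0 < R" "R < 1 - bin_entropy \<epsilon>"
    and "0 < \<rho>" "\<rho> < 1"
    and "0 < \<eta>"
  shows "(\<lambda>n. typical_avg_error \<epsilon> \<rho> \<eta> n (nat \<lfloor>R * real n\<rfloor>)) \<longlonglongrightarrow> 0"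
proof -
  note e = assms(1,2) and Rp = assms(3,4) and \<rho> = assms(5,6) and \<eta> = assms(7)
  define kk where "kk = (\<lambda>n::nat. nat \<lfloor>R * real n\<rfloor>)"
  have kR: "\<And>n. real (kk n) \<le> R * real n" unfolding kk_def by (rule kk_facts(1)[OF Rp(1)])
  have kinf: "filterlim kk at_top sequentially" unfolding kk_def by (rule kk_facts(2)[OF Rp(1)])
  define r where "r = \<epsilon> / (1 - \<epsilon>)"
  have r0: "0 < r" and r1: "r < 1" unfolding r_def using e by (auto simp: divide_less_eq)
  define \<delta> where "\<delta> = (1 - bin_entropy \<epsilon> - R) * ln 2 / (2 * (- ln r))"
  define A0 where "A0 = 1 - \<epsilon> + \<epsilon> * r"
  define A1 where "A1 = (1 - \<epsilon>) * r + \<epsilon>"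
  have d0: "0 < \<delta>" and capL: "r powr (- (\<epsilon> + \<delta>)) * 2 powr R * ((A0 + A1) / 2) < 1"
    using cap_rate[OF e Rp] unfolding \<delta>_def r_def A0_def A1_def by auto
  define s where "s = 1 + ((\<epsilon> + \<delta>) - \<epsilon>) / (2 * \<epsilon>)"
  have s1: "1 < s" and qb1: "(1 - \<epsilon> + \<epsilon> * s) * s powr (- (\<epsilon> + \<delta>)) < 1"
    using chernoff_up[of \<epsilon> "\<epsilon> + \<delta>"] e d0 unfolding s_def by auto
  define qb where "qb = (1 - \<epsilon> + \<epsilon> * s) * s powr (- (\<epsilon> + \<delta>))"
  have qb0: "0 \<le> qb" unfolding qb_def using s1 e by simp
  define \<theta> where "\<theta> = 1 - 2 * \<rho>"
  have th1: "\<bar>\<theta>\<bar> < 1" unfolding \<theta>_def using \<rho> by simp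
  define Z where "Z = (1 - \<epsilon>) * sqrt r + \<epsilon> / sqrt r"
  have Z0: "0 \<le> Z" and Z1: "Z < 1" using Z_facts[OF e] unfolding Z_def r_def by auto
  define \<beta> where "\<beta> = (1 + Z) / 2 + (1 - Z) / 2 * \<bar>\<theta>\<bar>"
  have \<beta>0: "0 < \<beta>" unfolding \<beta>_def using Z0 Z1 by (simp add: add_pos_nonneg)
  have \<beta>1: "\<beta> < 1"
  proof -
    have "(1 - Z) / 2 * \<bar>\<theta>\<bar> < (1 - Z) / 2 * 1" using Z1 th1 by (intro mult_strict_left_mono) auto
    thus ?thesis unfolding \<beta>_def by (rule lin3) (simp add: field_simps)
  qed
  have lb: "ln \<beta> < 0" using \<beta>0 \<beta>1 by simp
  define lam where "lam = min (1/2) (- ln \<beta> / (3 * R))"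
  have lam0: "0 < lam" and lam1: "lam \<le> 1/2" and lamR: "R * lam \<le> - ln \<beta> / 3"
    unfolding lam_def using lb Rp(1) by (auto simp: min_def field_simps)
  have llam: "ln lam < 0" using lam0 lam1 by simp
  define dl where "dl = - ln \<beta> / (3 * R * (- ln lam))"
  have dl0: "0 < dl" unfolding dl_def using lb llam Rp(1) by (intro divide_pos_pos mult_pos_pos) auto
  define \<omega> where "\<omega> = (1 + lam) * lam powr (- dl)"
  have \<omega>1: "1 \<le> \<omega>"
  proof -
    have "lam powr 0 \<le> lam powr (- dl)" by (rule powr_mono') (use dl0 lam0 lam1 in auto)
    hence a: "1 \<le> lam powr (- dl)" using lam0 by simp
    have "1 * 1 \<le> (1 + lam) * lam powr (- dl)" by (rule mult_mono) (use a lam0 in auto)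
    thus ?thesis unfolding \<omega>_def by simp
  qed
  define qa where "qa = \<omega> powr R * \<beta>"
  have qa1: "qa < 1"
  proof -
    have q0: "0 < qa" unfolding qa_def using \<omega>1 \<beta>0 by simp
    have w0: "0 < \<omega>" using \<omega>1 by simp
    have l1: "ln qa = R * ln \<omega> + ln \<beta>" unfolding qa_def using w0 \<beta>0 by (simp add: ln_mult)
    have l2: "ln \<omega> = ln (1 + lam) + (- dl) * ln lam" unfolding \<omega>_def using lam0 by (simp add: ln_mult)
    have "ln qa = R * ln (1 + lam) + R * (dl * (- ln lam)) + ln \<beta>"
      unfolding l1 l2 by (simp add: algebra_simps)
    also have "R * (dl * (- ln lam)) = - ln \<beta> / 3" unfolding dl_def using llam Rp(1) by (simp add: field_simps)
    also have "R * ln (1 + lam) \<le> R * lam"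
      by (rule mult_left_mono) (use ln_add_one_self_le_self[of lam] lam0 Rp(1) in auto)
    hence "R * ln (1 + lam) + - ln \<beta> / 3 + ln \<beta> \<le> R * lam + - ln \<beta> / 3 + ln \<beta>" by simp
    also have "\<dots> < 0" using lamR lb by simp
    finally show ?thesis using q0 by simp
  qed
  have qa0: "0 \<le> qa" unfolding qa_def using \<beta>0 by simp
  define Gm where "Gm = (\<lambda>n. (A0 + A1) / 2 + \<bar>A0 - A1\<bar> / 2 * \<bar>\<theta>\<bar> powr (dl * kk n))"
  define base where "base = (\<lambda>n. r powr (- (\<epsilon> + \<delta>)) * 2 powr R * Gm n)"
  have A00: "0 \<le> A0" unfolding A0_def using e r0 by simp
  have A10: "0 \<le> A1" unfolding A1_def using e r0 by simp
  have base0: "\<And>n. 0 \<le> base n" unfolding base_def Gm_def using A00 A10 by simp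
  have base_lim: "base \<longlonglongrightarrow> r powr (- (\<epsilon> + \<delta>)) * 2 powr R * ((A0 + A1) / 2)"
  proof -
    have c1: "\<bar>\<theta>\<bar> powr dl < 1" using powr_less_mono2[OF dl0 _ th1] by simp
    have c0: "0 \<le> \<bar>\<theta>\<bar> powr dl" by simp
    have pw: "(\<lambda>n. (\<bar>\<theta>\<bar> powr dl) ^ (kk n)) \<longlonglongrightarrow> 0"
      by (rule filterlim_compose[OF LIMSEQ_power_zero kinf]) (use c0 c1 in simp)
    have le: "\<bar>\<theta>\<bar> powr (dl * kk n) \<le> (\<bar>\<theta>\<bar> powr dl) ^ (kk n)" for n
    proof (cases "\<theta> = 0")
      case True thus ?thesis by simp
    next
      case False thus ?thesis by (simp add: powr_power mult.commute)
    qed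
    have t0: "(\<lambda>n. \<bar>\<theta>\<bar> powr (dl * kk n)) \<longlonglongrightarrow> 0"
      by (rule tendsto_sandwich[OF _ _ tendsto_const pw]) (use le in auto)
    have "Gm \<longlonglongrightarrow> (A0 + A1) / 2 + \<bar>A0 - A1\<bar> / 2 * 0"
      unfolding Gm_def by (intro tendsto_add tendsto_mult tendsto_const t0)
    hence "Gm \<longlonglongrightarrow> (A0 + A1) / 2" by simp
    thus ?thesis unfolding base_def by (intro tendsto_mult tendsto_const)
  qed
  define EB where "EB = (\<lambda>n. (1 + lam) ^ kk n * lam powr (- (dl * kk n)) * \<beta> ^ n
      + (1 - \<epsilon> + \<epsilon> * s) ^ n * s powr (- ((\<epsilon> + \<delta>) * n))
      + r powr (- ((\<epsilon> + \<delta>) * n)) * 2 ^ kk n * Gm n ^ n)"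
  have EB_le: "EB n \<le> qa ^ n + qb ^ n + base n ^ n" for n
  proof -
    have \<omega>0: "0 < \<omega>" using \<omega>1 by simp
    have Ta: "(1 + lam) ^ kk n * lam powr (- (dl * kk n)) * \<beta> ^ n \<le> qa ^ n"
    proof -
      have "(1 + lam) ^ kk n * lam powr (- (dl * kk n)) = \<omega> ^ kk n"
        unfolding \<omega>_def by (rule mgf_pow[OF lam0])
      also have "\<dots> = \<omega> powr (real (kk n))" using \<omega>0 by (simp add: powr_realpow)
      also have "\<dots> \<le> \<omega> powr (R * n)" by (rule powr_mono[OF kR \<omega>1])
      also have "\<dots> = (\<omega> powr R) ^ n" using \<omega>0 by (simp add: powr_power mult.commute)
      finally have "(1 + lam) ^ kk n * lam powr (- (dl * kk n)) * \<beta> ^ n \<le> (\<omega> powr R) ^ n * \<beta> ^ n"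
        using \<beta>0 by (intro mult_right_mono) auto
      thus ?thesis unfolding qa_def by (simp add: power_mult_distrib)
    qed
    have Tb: "(1 - \<epsilon> + \<epsilon> * s) ^ n * s powr (- ((\<epsilon> + \<delta>) * n)) = qb ^ n"
      unfolding qb_def by (rule mgf_pow) (use s1 in simp)
    have Tc: "r powr (- ((\<epsilon> + \<delta>) * n)) * 2 ^ kk n * Gm n ^ n \<le> base n ^ n"
    proof -
      have r': "r powr (- ((\<epsilon> + \<delta>) * n)) = (r powr (- (\<epsilon> + \<delta>))) ^ n"
        using mgf_pow[OF r0, of 1 n "\<epsilon> + \<delta>"] by simp
      have "(2::real) ^ kk n = 2 powr (real (kk n))" by (simp add: powr_realpow)
      also have "\<dots> \<le> 2 powr (R * n)" by (rule powr_mono[OF kR]) simp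
      also have "\<dots> = (2 powr R) ^ n" by (simp add: powr_power mult.commute)
      finally have t2: "(2::real) ^ kk n \<le> (2 powr R) ^ n" .
      have G0: "0 \<le> Gm n ^ n" unfolding Gm_def using A00 A10 by simp
      have "r powr (- ((\<epsilon> + \<delta>) * n)) * 2 ^ kk n * Gm n ^ n \<le> r powr (- ((\<epsilon> + \<delta>) * n)) * (2 powr R) ^ n * Gm n ^ n"
        using t2 G0 by (intro mult_right_mono mult_left_mono) auto
      also have "\<dots> = base n ^ n" unfolding base_def r' by (simp add: power_mult_distrib)
      finally show ?thesis .
    qed
    show ?thesis unfolding EB_def using Ta Tb Tc by linarith
  qed
  have B_lim: "(\<lambda>n. 2 * (qa ^ n + qb ^ n + base n ^ n)) \<longlonglongrightarrow> 0"
  proof -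
    have "(\<lambda>n. qa ^ n) \<longlonglongrightarrow> 0" by (rule LIMSEQ_power_zero) (use qa0 qa1 in simp)
    moreover have "(\<lambda>n. qb ^ n) \<longlonglongrightarrow> 0" by (rule LIMSEQ_power_zero) (use qb0 qb1 qb_def in simp)
    moreover have "(\<lambda>n. base n ^ n) \<longlonglongrightarrow> 0" by (rule pow_base_tendsto[OF base_lim capL base0])
    ultimately have "(\<lambda>n. qa ^ n + qb ^ n + base n ^ n) \<longlonglongrightarrow> 0 + 0 + 0" by (intro tendsto_add)
    from tendsto_mult[OF tendsto_const[of 2] this] show ?thesis by simp
  qed
  define num where "num = (\<lambda>n. \<Sum>A\<in>typical_mats \<rho> \<eta> n (kk n). bern_mat_prob \<rho> n (kk n) A * prob_error \<epsilon> n (kk n) A)"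
  define den where "den = (\<lambda>n. \<Sum>A\<in>typical_mats \<rho> \<eta> n (kk n). bern_mat_prob \<rho> n (kk n) A)"
  have bn: "\<And>n k A. 0 \<le> bern_mat_prob \<rho> n k A" using \<rho> by (intro bern_nonneg) auto
  have pn: "\<And>n k A. 0 \<le> prob_error \<epsilon> n k A" using e by (intro pe_nonneg) auto
  have num0: "\<And>n. 0 \<le> num n" unfolding num_def using bn pn by (intro sum_nonneg mult_nonneg_nonneg) auto
  have numEB: "num n \<le> EB n" for n
  proof -
    have "num n \<le> (\<Sum>A\<in>bmats n (kk n). bern_mat_prob \<rho> n (kk n) A * prob_error \<epsilon> n (kk n) A)"
      unfolding num_def by (rule sum_mono2[OF finite_bmats]) (use bn pn in \<open>auto simp: typical_mats_def\<close>)
    also have "\<dots> \<le> EB n"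
      using exp_bound2[OF e s1 less_imp_le[OF dl0] less_imp_le[OF \<rho>(1)] less_imp_le[OF \<rho>(2)] lam0,
           where n=n and k="kk n" and t="(\<epsilon> + \<delta>) * n"] lam1
      unfolding EB_def \<beta>_def Gm_def Z_def \<theta>_def r_def A0_def A1_def by simp
    finally show ?thesis .
  qed
  have den_ev: "eventually (\<lambda>n. 1/2 \<le> den n) sequentially"
  proof -
    define \<tau>1 where "\<tau>1 = 1 + ((\<rho> + \<eta>) - \<rho>) / (2 * \<rho>)"
    have \<tau>1: "1 < \<tau>1" and q1: "(1 - \<rho> + \<rho> * \<tau>1) * \<tau>1 powr (- (\<rho> + \<eta>)) < 1"
      using chernoff_up[of \<rho> "\<rho> + \<eta>"] \<rho> \<eta> unfolding \<tau>1_def by auto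
    define a2 where "a2 = \<rho> - min \<eta> (\<rho> / 2)"
    have a2: "0 < a2" "a2 < \<rho>" "\<rho> - \<eta> \<le> a2" unfolding a2_def using \<rho> \<eta> by (auto simp: min_def)
    define \<tau>2 where "\<tau>2 = 1 - (\<rho> - a2) / (2 * \<rho>)"
    have \<tau>2: "0 < \<tau>2" "\<tau>2 < 1" and q2: "(1 - \<rho> + \<rho> * \<tau>2) * \<tau>2 powr (- a2) < 1"
      using chernoff_down[OF a2(1,2) \<rho>(2)] unfolding \<tau>2_def by auto
    define q1 where "q1 = (1 - \<rho> + \<rho> * \<tau>1) * \<tau>1 powr (- (\<rho> + \<eta>))"
    define q2 where "q2 = (1 - \<rho> + \<rho> * \<tau>2) * \<tau>2 powr (- a2)"
    have q10: "0 \<le> q1" unfolding q1_def using \<rho> \<tau>1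
      by (intro mult_nonneg_nonneg) (auto intro: add_nonneg_nonneg)
    have q20: "0 \<le> q2" unfolding q2_def using \<rho> \<tau>2
      by (intro mult_nonneg_nonneg) (auto intro: add_nonneg_nonneg)
    have "(\<lambda>n. q1 ^ n) \<longlonglongrightarrow> 0" by (rule LIMSEQ_power_zero) (use q10 q1 q1_def in simp)
    hence ev1: "eventually (\<lambda>n. q1 ^ n < 1/4) sequentially" by (rule order_tendstoD) simp
    have "(\<lambda>n. q2 ^ n) \<longlonglongrightarrow> 0" by (rule LIMSEQ_power_zero) (use q20 q2 q2_def in simp)
    hence ev2: "eventually (\<lambda>n. q2 ^ n < 1/4) sequentially" by (rule order_tendstoD) simp
    have ev3: "eventually (\<lambda>n. 1 \<le> kk n) sequentially" using kinf by (simp add: filterlim_at_top)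
    have ev4: "eventually (\<lambda>n. 1 \<le> n) sequentially" by (rule eventually_ge_at_top)
    show ?thesis using ev1 ev2 ev3 ev4
    proof eventually_elim
      case (elim n)
      have N: "0 < n * kk n" using elim by simp
      have nk: "n \<le> n * kk n" using elim by simp
      have m: "1 - q1 ^ (n * kk n) - q2 ^ (n * kk n) \<le> den n"
        using typ_mass[OF \<rho> a2(3) less_imp_le[OF \<tau>1] \<tau>2(1) less_imp_le[OF \<tau>2(2)] N]
        unfolding den_def q1_def q2_def .
      have "q1 ^ (n * kk n) \<le> q1 ^ n" by (rule power_decreasing[OF nk q10]) (use q1 q1_def in simp)
      moreover have "q2 ^ (n * kk n) \<le> q2 ^ n" by (rule power_decreasing[OF nk q20]) (use q2 q2_def in simp)
      ultimately show ?case using m elim by linarith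
    qed
  qed
  have avg: "\<And>n. typical_avg_error \<epsilon> \<rho> \<eta> n (kk n) = num n / den n"
    unfolding typical_avg_error_def num_def den_def ..
  have ev1: "eventually (\<lambda>n. 0 \<le> typical_avg_error \<epsilon> \<rho> \<eta> n (kk n)) sequentially"
    using den_ev by eventually_elim (simp add: avg num0)
  have ev2: "eventually (\<lambda>n. typical_avg_error \<epsilon> \<rho> \<eta> n (kk n) \<le> 2 * (qa ^ n + qb ^ n + base n ^ n)) sequentially"
    using den_ev
  proof eventually_elim
    case (elim n)
    have "num n / den n \<le> num n / (1/2)" using elim num0 by (intro divide_left_mono) auto
    also have "\<dots> = 2 * num n" by simp
    also have "\<dots> \<le> 2 * (qa ^ n + qb ^ n + base n ^ n)" using numEB[of n] EB_le[of n] by simp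
    finally show ?case unfolding avg .
  qed
  have "(\<lambda>n. typical_avg_error \<epsilon> \<rho> \<eta> n (kk n)) \<longlonglongrightarrow> 0"
    by (rule tendsto_sandwich[OF ev1 ev2 tendsto_const B_lim])
  thus ?thesis unfolding kk_def .
qed


end
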